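(* Let $U\in C^4(-1,1)$ with $U'>c_0>0$, $U(0)=0$, $U''(0)=0$ and $-C\le U''/U\le0$. Consider, for $m$ fixed and $\lambda<0$, the problem $$\Phi''(y)-\frac{U''(y)}{U(y)}\Phi(y)+\lambda\Phi(y)=-\frac{m}{U'(0)}\Phi(0)\delta(0),\qquad \Phi(\pm1)=0,$$ understood weakly: $\Phi\in H^1_0(-1,1)$ and $$\int_{-1}^1\Big(\Phi'\varphi'+\frac{U''}{U}\Phi\varphi-\lambda\Phi\varphi\Big)dy=\frac{m\,\Phi(0)\varphi(0)}{U'(0)}\quad\text{for all }\varphi\in H^1_0(-1,1).$$ Then this problem admits a nontrivial solution for fixed $m$ and $\lambda<0$ if and only if $m=\mathfrak{M}(\lambda)$ for some function $\mathfrak{M}$ of $\lambda$. Moreover $\mathfrak{M}$ is strictly decreasing: $\partial_\lambda\mathfrak{M}<0$.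
   Context: $\delta(0)$ denotes the Dirac mass at $y=0$. *)

theory Defs
  imports "HOL-Analysis.Analysis"
begin

definition Ck_on :: "nat \<Rightarrow> real set \<Rightarrow> (real \<Rightarrow> real) \<Rightarrow> bool" where
  "Ck_on k S f \<longleftrightarrow>
     (\<forall>j<k. \<forall>x\<in>S. ((deriv ^^ j) f) differentiable (at x)) \<and>
     continuous_on S ((deriv ^^ k) f)"

text \<open>H10 f f': f belongs to H^1_0(-1,1) with weak derivative f'.
  In one dimension this means f is (the continuous representative)
  f(x) = integral of f' from -1 to x, with f' square integrable on (-1,1),
  and the boundary values f(-1) = 0 (automatic) and f(1) = 0.\<close>
definition H10 :: "(real \<Rightarrow> real) \<Rightarrow> (real \<Rightarrow> real) \<Rightarrow> bool" where
  "H10 f f' \<longleftrightarrow>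
     f' \<in> borel_measurable lborel \<and>
     set_integrable lborel {-1..1} (\<lambda>x. (f' x)\<^sup>2) \<and>
     (\<forall>x\<in>{-1..1}. f x = (LBINT t=-1..x. f' t)) \<and>
     f 1 = 0"

definition weak_sol :: "(real \<Rightarrow> real) \<Rightarrow> real \<Rightarrow> real \<Rightarrow> (real \<Rightarrow> real) \<Rightarrow> (real \<Rightarrow> real) \<Rightarrow> bool" where
  "weak_sol U m lam \<Phi> \<Phi>' \<longleftrightarrow>
     H10 \<Phi> \<Phi>' \<and>
     (\<forall>\<phi> \<phi>'. H10 \<phi> \<phi>' \<longrightarrow>
        (LBINT y=-1..1. \<Phi>' y * \<phi>' y + (deriv (deriv U) y / U y) * \<Phi> y * \<phi> y
                         - lam * \<Phi> y * \<phi> y)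
        = m * \<Phi> 0 * \<phi> 0 / deriv U 0)"

definition has_nontrivial_sol :: "(real \<Rightarrow> real) \<Rightarrow> real \<Rightarrow> real \<Rightarrow> bool" where
  "has_nontrivial_sol U m lam \<longleftrightarrow>
     (\<exists>\<Phi> \<Phi>'. weak_sol U m lam \<Phi> \<Phi>' \<and> (\<exists>x\<in>{-1..1}. \<Phi> x \<noteq> 0))"

end

theory Submission
  imports Defs "HOL-Analysis.Analysis"
begin

lemma ii_Icc:
  fixes a b :: real
  assumes "a \<le> b"
  shows "interval_lebesgue_integrable lborel (ereal a) (ereal b) f \<longleftrightarrow> set_integrable lborel {a..b} f"
proof -
  have "set_integrable lborel {a<..<b} f \<longleftrightarrow> set_integrable lborel {a..b} f"
    by (rule set_integrable_discrete_difference[where X="{a,b}"]) auto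
  then show ?thesis using assms by (simp add: interval_lebesgue_integrable_def)
qed

lemma ii_sub:
  fixes a b c d :: real
  assumes "a \<le> c" "c \<le> d" "d \<le> b" "interval_lebesgue_integrable lborel a b f"
  shows "interval_lebesgue_integrable lborel c d f"
  using assms unfolding interval_lebesgue_integrable_def
  by (auto intro: set_integrable_subset)

lemma ii_mono:
  fixes a b :: real and f g :: "real \<Rightarrow> real"
  assumes "a \<le> b" "interval_lebesgue_integrable lborel a b f" "interval_lebesgue_integrable lborel a b g"
    "\<And>x. a < x \<Longrightarrow> x < b \<Longrightarrow> f x \<le> g x"
  shows "(LBINT x=a..b. f x) \<le> (LBINT x=a..b. g x)"
  using assms unfolding interval_lebesgue_integrable_def interval_lebesgue_integral_def
  by (auto intro!: set_integral_mono)

lemma ii_nonneg: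
  fixes a b :: real and f :: "real \<Rightarrow> real"
  assumes "a \<le> b" "\<And>x. a < x \<Longrightarrow> x < b \<Longrightarrow> 0 \<le> f x"
  shows "0 \<le> (LBINT x=a..b. f x)"
  using assms unfolding interval_lebesgue_integral_def set_lebesgue_integral_def
  by (auto intro!: integral_nonneg simp: indicator_def)

lemma ii_abs:
  fixes a b :: real and f :: "real \<Rightarrow> real"
  assumes "a \<le> b" "interval_lebesgue_integrable lborel a b f"
  shows "\<bar>LBINT x=a..b. f x\<bar> \<le> (LBINT x=a..b. \<bar>f x\<bar>)"
  using interval_integral_norm[OF assms(2)] assms by simp

lemma ii_cont:
  fixes a b :: real and f :: "real \<Rightarrow> real"
  assumes "a \<le> b" "interval_lebesgue_integrable lborel a b f"
  shows "continuous_on {a..b} (\<lambda>x. LBINT t=a..x. f t)"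
proof -
  have si: "set_integrable lborel {a..b} f" using assms ii_Icc by blast
  have "f integrable_on {a..b}" using set_borel_integral_eq_integral(1)[OF si] .
  then have c: "continuous_on {a..b} (\<lambda>x. integral {a..x} f)"
    by (rule indefinite_integral_continuous_1)
  show ?thesis
  proof (rule continuous_on_eq[OF c])
    fix x assume x: "x \<in> {a..b}"
    have "set_integrable lborel {a..x} f" using si x by (auto intro: set_integrable_subset)
    then show "integral {a..x} f = (LBINT t=a..x. f t)"
      using x by (simp add: interval_integral_eq_integral)
  qed
qed

definition ac :: "real \<Rightarrow> real \<Rightarrow> (real \<Rightarrow> real) \<Rightarrow> (real \<Rightarrow> real) \<Rightarrow> bool" where
  "ac a b F f \<longleftrightarrow> a \<le> b \<and> interval_lebesgue_integrable lborel a b f \<and>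
      (\<forall>x\<in>{a..b}. F x = F a + (LBINT t=a..x. f t))"

lemma acD:
  assumes "ac a b F f"
  shows "a \<le> b" "interval_lebesgue_integrable lborel a b f"
    "\<And>x. x \<in> {a..b} \<Longrightarrow> F x = F a + (LBINT t=a..x. f t)"
  using assms unfolding ac_def by blast+

lemma acI:
  assumes "a \<le> b" "interval_lebesgue_integrable lborel a b f"
    "\<And>x. x \<in> {a..b} \<Longrightarrow> F x = F a + (LBINT t=a..x. f t)"
  shows "ac a b F f"
  using assms unfolding ac_def by blast

lemma ac_cont: assumes "ac a b F f" shows "continuous_on {a..b} F"
proof -
  note A = acD[OF assms]
  have "continuous_on {a..b} (\<lambda>x. F a + (LBINT t=a..x. f t))"
    by (intro continuous_on_add continuous_on_const ii_cont A(1,2))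
  then show ?thesis using A(3) by (metis (no_types, lifting) continuous_on_cong)
qed

lemma ac_sub:
  assumes "ac a b F f" "a \<le> c" "c \<le> d" "d \<le> b"
  shows "ac c d F f"
proof (rule acI)
  note A = acD[OF assms(1)]
  show "c \<le> d" by fact
  show "interval_lebesgue_integrable lborel c d f" using assms A ii_sub by blast
  fix x assume x: "x \<in> {c..d}"
  have xx: "x \<in> {a..b}" "c \<in> {a..b}" using x assms by auto
  have "(LBINT t=a..x. f t) = (LBINT t=a..c. f t) + (LBINT t=c..x. f t)"
    by (rule interval_integral_sum[symmetric]) (use ii_sub[OF _ _ _ A(2), of a x] assms x in \<open>auto simp: min_def max_def\<close>)
  then show "F x = F c + (LBINT t=c..x. f t)" using A(3)[OF xx(1)] A(3)[OF xx(2)] by linarith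
qed

lemma ac_FTC:
  fixes F f :: "real \<Rightarrow> real"
  assumes "a \<le> b" "continuous_on {a..b} f" "\<And>x. x \<in> {a..b} \<Longrightarrow> (F has_real_derivative f x) (at x within {a..b})"
  shows "ac a b F f"
proof (rule acI)
  show "interval_lebesgue_integrable lborel a b f" by (rule interval_integrable_continuous_on) fact+
  fix x assume x: "x \<in> {a..b}"
  have "(LBINT t=a..x. f t) = F x - F a"
  proof (rule interval_integral_FTC_finite)
    show "continuous_on {min a x..max a x} f" using x assms(2) by (auto intro: continuous_on_subset)
    fix y assume "min a x \<le> y" "y \<le> max a x"
    then have y: "y \<in> {a..b}" "{min a x..max a x} \<subseteq> {a..b}" using x by auto
    have "(F has_vector_derivative f y) (at y within {a..b})"
      using assms(3)[OF y(1)] by (simp add: has_real_derivative_iff_has_vector_derivative)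
    then show "(F has_vector_derivative f y) (at y within {min a x..max a x})"
      by (rule has_vector_derivative_within_subset) (rule y(2))
  qed
  then show "F x = F a + (LBINT t=a..x. f t)" by simp
next
  show "a \<le> b" by fact
qed

lemma ac_add: assumes "ac a b F f" "ac a b G g" shows "ac a b (\<lambda>x. F x + G x) (\<lambda>x. f x + g x)"
proof (rule acI)
  note A = acD[OF assms(1)] and B = acD[OF assms(2)]
  show "a \<le> b" by (rule A(1))
  show "interval_lebesgue_integrable lborel a b (\<lambda>x. f x + g x)"
    using A B by (intro interval_lebesgue_integral_add(1)) auto
  fix x assume x: "x \<in> {a..b}"
  have i: "interval_lebesgue_integrable lborel a x f" "interval_lebesgue_integrable lborel a x g"
    using A B x by (auto intro: ii_sub)
  show "F x + G x = F a + G a + (LBINT t=a..x. f t + g t)"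
    using A(3)[OF x] B(3)[OF x] interval_lebesgue_integral_add(2)[OF i] by linarith
qed

lemma ac_diff: assumes "ac a b F f" "ac a b G g" shows "ac a b (\<lambda>x. F x - G x) (\<lambda>x. f x - g x)"
proof (rule acI)
  note A = acD[OF assms(1)] and B = acD[OF assms(2)]
  show "a \<le> b" by (rule A(1))
  show "interval_lebesgue_integrable lborel a b (\<lambda>x. f x - g x)"
    using A B by (intro interval_lebesgue_integral_diff(1)) auto
  fix x assume x: "x \<in> {a..b}"
  have i: "interval_lebesgue_integrable lborel a x f" "interval_lebesgue_integrable lborel a x g"
    using A B x by (auto intro: ii_sub)
  show "F x - G x = F a - G a + (LBINT t=a..x. f t - g t)"
    using A(3)[OF x] B(3)[OF x] interval_lebesgue_integral_diff(2)[OF i] by linarith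
qed

lemma ac_cmult: assumes "ac a b F f" shows "ac a b (\<lambda>x. c * F x) (\<lambda>x. c * f x)"
proof (rule acI)
  note A = acD[OF assms(1)]
  show "a \<le> b" by (rule A(1))
  show "interval_lebesgue_integrable lborel a b (\<lambda>x. c * f x)" using A by auto
  fix x assume x: "x \<in> {a..b}"
  show "c * F x = c * F a + (LBINT t=a..x. c * f t)"
    using A(3)[OF x] by (simp add: algebra_simps)
qed

lemma ac_const: "a \<le> b \<Longrightarrow> ac a b (\<lambda>x. c) (\<lambda>x. 0)"
  by (rule acI) (auto simp: interval_lebesgue_integrable_def set_integrable_def)

lemma fubini_tri:
  fixes f g :: "real \<Rightarrow> real"
  assumes f: "integrable lborel f" and g: "integrable lborel g"
  shows "(\<integral>x. f x * (\<integral>t. g t * indicator {..x} t \<partial>lborel) \<partial>lborel)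
       + (\<integral>t. g t * (\<integral>x. f x * indicator {..<t} x \<partial>lborel) \<partial>lborel)
       = (\<integral>x. f x \<partial>lborel) * (\<integral>t. g t \<partial>lborel)"
proof -
  have fm[measurable]: "f \<in> borel_measurable lborel" and gm[measurable]: "g \<in> borel_measurable lborel"
    using f g by auto
  have km: "(\<lambda>(x,t). f x * g t) \<in> borel_measurable (lborel \<Otimes>\<^sub>M lborel)" by measurable
  have k: "integrable (lborel \<Otimes>\<^sub>M lborel) (\<lambda>(x,t). f x * g t)"
  proof (rule lborel_pair.Fubini_integrable[OF km])
    have "(\<lambda>x. \<integral>t. norm (case (x, t) of (x, t) \<Rightarrow> f x * g t) \<partial>lborel) = (\<lambda>x. \<bar>f x\<bar> * (\<integral>t. \<bar>g t\<bar> \<partial>lborel))"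
      by (simp add: abs_mult)
    moreover have "integrable lborel (\<lambda>x. \<bar>f x\<bar> * (\<integral>t. \<bar>g t\<bar> \<partial>lborel))"
      using f by (intro integrable_mult_left integrable_abs)
    ultimately show "integrable lborel (\<lambda>x. \<integral>t. norm (case (x, t) of (x, t) \<Rightarrow> f x * g t) \<partial>lborel)" by simp
    show "AE x in lborel. integrable lborel (\<lambda>t. case (x, t) of (x, t) \<Rightarrow> f x * g t)"
      using g by (auto intro: integrable_mult_right)
  qed
  define h1 where "h1 = (\<lambda>x t. if t \<le> x then f x * g t else (0::real))"
  define h2 where "h2 = (\<lambda>x t. if x < t then f x * g t else (0::real))"
  have h1m: "case_prod h1 \<in> borel_measurable (lborel \<Otimes>\<^sub>M lborel)" unfolding h1_def by measurable
  have h2m: "case_prod h2 \<in> borel_measurable (lborel \<Otimes>\<^sub>M lborel)" unfolding h2_def by measurable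
  have h1i: "integrable (lborel \<Otimes>\<^sub>M lborel) (case_prod h1)"
    by (rule Bochner_Integration.integrable_bound[OF k h1m]) (auto simp: h1_def)
  have h2i: "integrable (lborel \<Otimes>\<^sub>M lborel) (case_prod h2)"
    by (rule Bochner_Integration.integrable_bound[OF k h2m]) (auto simp: h2_def)
  have e1: "(\<integral>x. f x * (\<integral>t. g t * indicator {..x} t \<partial>lborel) \<partial>lborel) = (\<integral>x. (\<integral>t. h1 x t \<partial>lborel) \<partial>lborel)"
    by (rule Bochner_Integration.integral_cong[OF refl]) (auto simp: h1_def indicator_def intro!: Bochner_Integration.integral_cong simp flip: integral_mult_right_zero)
  have e2: "(\<integral>t. g t * (\<integral>x. f x * indicator {..<t} x \<partial>lborel) \<partial>lborel) = (\<integral>t. (\<integral>x. h2 x t \<partial>lborel) \<partial>lborel)"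
    by (rule Bochner_Integration.integral_cong[OF refl]) (auto simp: h2_def indicator_def intro!: Bochner_Integration.integral_cong simp flip: integral_mult_right_zero)
  have "(\<integral>x. (\<integral>t. h1 x t \<partial>lborel) \<partial>lborel) = integral\<^sup>L (lborel \<Otimes>\<^sub>M lborel) (\<lambda>(x, t). h1 x t)"
    by (rule lborel_pair.integral_fst[OF h1i])
  moreover have "(\<integral>t. (\<integral>x. h2 x t \<partial>lborel) \<partial>lborel) = integral\<^sup>L (lborel \<Otimes>\<^sub>M lborel) (case_prod h2)"
    by (rule lborel_pair.integral_snd[OF h2i])
  moreover have "integral\<^sup>L (lborel \<Otimes>\<^sub>M lborel) (case_prod h1) + integral\<^sup>L (lborel \<Otimes>\<^sub>M lborel) (case_prod h2)
      = integral\<^sup>L (lborel \<Otimes>\<^sub>M lborel) (\<lambda>(x,t). f x * g t)"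
  proof -
    have "integral\<^sup>L (lborel \<Otimes>\<^sub>M lborel) (case_prod h1) + integral\<^sup>L (lborel \<Otimes>\<^sub>M lborel) (case_prod h2)
      = integral\<^sup>L (lborel \<Otimes>\<^sub>M lborel) (\<lambda>p. case_prod h1 p + case_prod h2 p)"
      by (rule Bochner_Integration.integral_add[symmetric, OF h1i h2i])
    also have "\<dots> = integral\<^sup>L (lborel \<Otimes>\<^sub>M lborel) (\<lambda>(x,t). f x * g t)"
      by (rule Bochner_Integration.integral_cong) (auto simp: h1_def h2_def)
    finally show ?thesis .
  qed
  moreover have "integral\<^sup>L (lborel \<Otimes>\<^sub>M lborel) (\<lambda>(x,t). f x * g t) = (\<integral>x. (\<integral>t. f x * g t \<partial>lborel) \<partial>lborel)"
    by (rule lborel_pair.integral_fst[symmetric]) (use k in simp)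
  moreover have "(\<integral>x. (\<integral>t. f x * g t \<partial>lborel) \<partial>lborel) = (\<integral>x. f x \<partial>lborel) * (\<integral>t. g t \<partial>lborel)"
    by simp
  ultimately show ?thesis using e1 e2 by simp
qed


lemma LBINT_ind:
  fixes a b :: real and h :: "real \<Rightarrow> real"
  assumes "a \<le> b"
  shows "(LBINT x=a..b. h x) = (\<integral>x. indicator {a..b} x * h x \<partial>lborel)"
  using assms by (simp add: interval_integral_Icc set_lebesgue_integral_def)

lemma ii_ind:
  fixes a b :: real and h :: "real \<Rightarrow> real"
  assumes "a \<le> b"
  shows "interval_lebesgue_integrable lborel a b h \<longleftrightarrow> integrable lborel (\<lambda>x. indicator {a..b} x * h x)"
  using assms by (simp add: ii_Icc set_integrable_def)

lemma cont_bounded: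
  fixes G :: "real \<Rightarrow> real"
  assumes "continuous_on {a..b} G"
  obtains B where "\<And>x. x \<in> {a..b} \<Longrightarrow> \<bar>G x\<bar> \<le> B"
proof -
  have "bounded (G ` {a..b})" by (intro compact_imp_bounded compact_continuous_image assms compact_Icc)
  then obtain B where "\<forall>y\<in>G ` {a..b}. norm y \<le> B" unfolding bounded_iff by blast
  then have "\<And>x. x \<in> {a..b} \<Longrightarrow> \<bar>G x\<bar> \<le> B" by auto
  then show ?thesis by (rule that)
qed

lemma cont_meas:
  fixes G :: "real \<Rightarrow> real"
  assumes "continuous_on {a..b} G"
  shows "(\<lambda>x. indicator {a..b} x * G x) \<in> borel_measurable lborel"
  using borel_measurable_continuous_on_indicator[OF _ assms] by simp

lemma ii_mult_cont:
  fixes f G :: "real \<Rightarrow> real"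
  assumes ab: "a \<le> b" and fi: "interval_lebesgue_integrable lborel a b f" and G: "continuous_on {a..b} G"
  shows "interval_lebesgue_integrable lborel a b (\<lambda>x. f x * G x)"
proof -
  have si: "integrable lborel (\<lambda>x. indicator {a..b} x * f x)" using fi ab ii_ind by blast
  obtain B where B: "\<And>x. x \<in> {a..b} \<Longrightarrow> \<bar>G x\<bar> \<le> B" using cont_bounded[OF G] by blast
  have "integrable lborel (\<lambda>x. indicator {a..b} x * (f x * G x))"
  proof (rule Bochner_Integration.integrable_bound)
    show "integrable lborel (\<lambda>x. B * (indicator {a..b} x * f x))" using si by simp
    have "(\<lambda>x. (indicator {a..b} x * f x) * (indicator {a..b} x * G x)) \<in> borel_measurable lborel"
      using borel_measurable_times[OF borel_measurable_integrable[OF si] cont_meas[OF G]] .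
    then show "(\<lambda>x. indicator {a..b} x * (f x * G x)) \<in> borel_measurable lborel"
      by (rule measurable_cong[THEN iffD1, rotated]) (simp add: indicator_def)
    have "0 \<le> B" using B[of a] ab by auto
    then show "AE x in lborel. norm (indicator {a..b} x * (f x * G x)) \<le> norm (B * (indicator {a..b} x * f x))"
      using B by (auto simp: indicator_def abs_mult mult_right_mono mult.commute)
  qed
  then show ?thesis using ab ii_ind by blast
qed

lemma ac_ibp:
  fixes F f G g :: "real \<Rightarrow> real"
  assumes F: "ac a b F f" and G: "ac a b G g"
  shows "interval_lebesgue_integrable lborel a b (\<lambda>x. f x * G x + F x * g x)"
    and "(LBINT x=a..b. f x * G x + F x * g x) = F b * G b - F a * G a"
proof -
  note A = acD[OF F] and B = acD[OF G]
  have ab: "a \<le> b" by (rule A(1))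
  have Fc: "continuous_on {a..b} F" using F by (rule ac_cont)
  have Gc: "continuous_on {a..b} G" using G by (rule ac_cont)
  have i1: "interval_lebesgue_integrable lborel a b (\<lambda>x. f x * G x)" by (rule ii_mult_cont[OF ab A(2) Gc])
  have i2': "interval_lebesgue_integrable lborel a b (\<lambda>x. g x * F x)" by (rule ii_mult_cont[OF ab B(2) Fc])
  have i2: "interval_lebesgue_integrable lborel a b (\<lambda>x. F x * g x)" using i2' by (simp add: mult.commute)
  show "interval_lebesgue_integrable lborel a b (\<lambda>x. f x * G x + F x * g x)"
    using i1 i2 by (rule interval_lebesgue_integral_add(1))
  define ft where "ft = (\<lambda>x. indicator {a..b} x * f x)"
  define gt where "gt = (\<lambda>x. indicator {a..b} x * g x)"
  have fti: "integrable lborel ft" unfolding ft_def using A(2) ab ii_ind by blast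
  have gti: "integrable lborel gt" unfolding gt_def using B(2) ab ii_ind by blast
  note FT = fubini_tri[OF fti gti]
  have inner1: "ft x * (\<integral>t. gt t * indicator {..x} t \<partial>lborel) = indicator {a..b} x * (f x * (G x - G a))" for x
  proof (cases "x \<in> {a..b}")
    case True
    have "(\<integral>t. gt t * indicator {..x} t \<partial>lborel) = (\<integral>t. indicator {a..x} t * g t \<partial>lborel)"
      unfolding gt_def using True by (intro Bochner_Integration.integral_cong) (auto simp: indicator_def)
    also have "\<dots> = (LBINT t=a..x. g t)" using True by (simp add: LBINT_ind)
    also have "\<dots> = G x - G a" using B(3)[OF True] by simp
    finally show ?thesis unfolding ft_def using True by simp
  qed (simp add: ft_def)
  have inner2: "gt t * (\<integral>x. ft x * indicator {..<t} x \<partial>lborel) = indicator {a..b} t * (g t * (F t - F a))" for t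
  proof (cases "t \<in> {a..b}")
    case True
    have "(\<integral>x. ft x * indicator {..<t} x \<partial>lborel) = (\<integral>x. indicator {a..<t} x * f x \<partial>lborel)"
      unfolding ft_def using True by (intro Bochner_Integration.integral_cong) (auto simp: indicator_def)
    also have "\<dots> = (LINT x:{a..<t}|lborel. f x)" by (simp add: set_lebesgue_integral_def)
    also have "\<dots> = (LINT x:{a..t}|lborel. f x)"
      by (rule set_integral_discrete_difference[where X="{t}"]) auto
    also have "\<dots> = (LBINT x=a..t. f x)" using True by (simp add: interval_integral_Icc)
    also have "\<dots> = F t - F a" using A(3)[OF True] by simp
    finally show ?thesis unfolding gt_def using True by simp
  qed (simp add: gt_def)
  have s1: "(\<integral>x. ft x \<partial>lborel) = F b - F a"
  proof -
    have "(\<integral>x. ft x \<partial>lborel) = (LBINT x=a..b. f x)" unfolding ft_def using ab by (simp add: LBINT_ind)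
    then show ?thesis using A(3)[of b] ab by simp
  qed
  have s2: "(\<integral>x. gt x \<partial>lborel) = G b - G a"
  proof -
    have "(\<integral>x. gt x \<partial>lborel) = (LBINT x=a..b. g x)" unfolding gt_def using ab by (simp add: LBINT_ind)
    then show ?thesis using B(3)[of b] ab by simp
  qed
  have key: "(LBINT x=a..b. f x * (G x - G a)) + (LBINT x=a..b. g x * (F x - F a)) = (F b - F a) * (G b - G a)"
    using FT unfolding inner1 inner2 s1 s2 using ab by (simp add: LBINT_ind)
  have j1: "interval_lebesgue_integrable lborel a b (\<lambda>x. f x * (G x - G a))"
    by (rule ii_mult_cont[OF ab A(2)]) (intro continuous_intros Gc)
  have j2: "interval_lebesgue_integrable lborel a b (\<lambda>x. g x * (F x - F a))"
    by (rule ii_mult_cont[OF ab B(2)]) (intro continuous_intros Fc)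
  have j3: "interval_lebesgue_integrable lborel a b (\<lambda>x. G a * f x + F a * g x)"
    using A(2) B(2) by (intro interval_lebesgue_integral_add(1)) auto
  have "(LBINT x=a..b. f x * G x + F x * g x)
      = (LBINT x=a..b. (f x * (G x - G a) + g x * (F x - F a)) + (G a * f x + F a * g x))"
    by (simp add: algebra_simps)
  also have "\<dots> = (LBINT x=a..b. f x * (G x - G a)) + (LBINT x=a..b. g x * (F x - F a)) + (LBINT x=a..b. G a * f x + F a * g x)"
    using j1 j2 j3 by (simp add: interval_lebesgue_integral_add)
  also have "(LBINT x=a..b. G a * f x + F a * g x) = G a * (F b - F a) + F a * (G b - G a)"
    using A(2) B(2) A(3)[of b] B(3)[of b] ab by (simp add: interval_lebesgue_integral_add)
  finally show "(LBINT x=a..b. f x * G x + F x * g x) = F b * G b - F a * G a"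
    using key by (simp add: algebra_simps)
qed

lemma ac_mult:
  fixes F f G g :: "real \<Rightarrow> real"
  assumes F: "ac a b F f" and G: "ac a b G g"
  shows "ac a b (\<lambda>x. F x * G x) (\<lambda>x. f x * G x + F x * g x)"
proof (rule acI)
  show ab: "a \<le> b" using acD(1)[OF F] .
  show "interval_lebesgue_integrable lborel a b (\<lambda>x. f x * G x + F x * g x)" by (rule ac_ibp(1)[OF F G])
  fix x assume x: "x \<in> {a..b}"
  have "ac a x F f" "ac a x G g" using x by (auto intro: ac_sub[OF F] ac_sub[OF G])
  from ac_ibp(2)[OF this] show "F x * G x = F a * G a + (LBINT t=a..x. f t * G t + F t * g t)" by simp
qed

lemma ind_const_int:
  fixes a b B :: real
  shows "integrable lborel (\<lambda>x. indicator {a..b} x * B)"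
proof (cases "a \<le> b")
  case True
  have "interval_lebesgue_integrable lborel a b (\<lambda>x. B)"
    by (rule interval_integrable_continuous_on[OF True continuous_on_const])
  then show ?thesis by (rule ii_ind[OF True, THEN iffD1])
next
  case False
  then show ?thesis by (simp add: indicator_def)
qed

lemma ii_bounded_meas:
  fixes h :: "real \<Rightarrow> real"
  assumes ab: "a \<le> b" and m: "(\<lambda>x. indicator {a..b} x * h x) \<in> borel_measurable lborel"
    and B: "\<And>x. x \<in> {a..b} \<Longrightarrow> \<bar>h x\<bar> \<le> B"
  shows "interval_lebesgue_integrable lborel a b h"
proof -
  have "integrable lborel (\<lambda>x. indicator {a..b} x * h x)"
  proof (rule Bochner_Integration.integrable_bound[OF ind_const_int[of a b B] m])
    show "AE x in lborel. norm (indicator {a..b} x * h x) \<le> norm (indicator {a..b} x * B)"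
      using B by (auto simp: indicator_def intro: order_trans[OF _ abs_ge_self])
  qed
  then show ?thesis by (rule ii_ind[OF ab, THEN iffD2])
qed

lemma ii_dom_conv:
  fixes s :: "nat \<Rightarrow> real \<Rightarrow> real" and f :: "real \<Rightarrow> real"
  assumes ab: "a \<le> b" and m: "\<And>i. (\<lambda>x. indicator {a..b} x * s i x) \<in> borel_measurable lborel"
    and lim: "\<And>x. x \<in> {a..b} \<Longrightarrow> (\<lambda>i. s i x) \<longlonglongrightarrow> f x"
    and B: "\<And>i x. x \<in> {a..b} \<Longrightarrow> \<bar>s i x\<bar> \<le> B"
  shows "interval_lebesgue_integrable lborel a b f"
    and "(\<lambda>i. LBINT x=a..b. s i x) \<longlonglongrightarrow> (LBINT x=a..b. f x)"
proof -
  have lim': "(\<lambda>i. indicator {a..b} x * s i x) \<longlonglongrightarrow> indicator {a..b} x * f x" for x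
    by (cases "x \<in> {a..b}") (auto intro: tendsto_mult_left lim)
  have fm: "(\<lambda>x. indicator {a..b} x * f x) \<in> borel_measurable lborel"
    by (rule borel_measurable_LIMSEQ_real[OF lim' m])
  have fB: "\<bar>f x\<bar> \<le> B" if x: "x \<in> {a..b}" for x
  proof -
    have "(\<lambda>i. \<bar>s i x\<bar>) \<longlonglongrightarrow> \<bar>f x\<bar>" by (intro tendsto_rabs lim x)
    then show ?thesis by (rule LIMSEQ_le_const2) (intro exI[of _ 0] allI impI B x)
  qed
  show "interval_lebesgue_integrable lborel a b f" by (rule ii_bounded_meas[OF ab fm fB])
  have "(\<lambda>i. \<integral>x. indicator {a..b} x * s i x \<partial>lborel) \<longlonglongrightarrow> (\<integral>x. indicator {a..b} x * f x \<partial>lborel)"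
  proof (rule integral_dominated_convergence[OF fm m ind_const_int[of a b B]])
    show "AE x in lborel. (\<lambda>i. indicator {a..b} x * s i x) \<longlonglongrightarrow> indicator {a..b} x * f x"
      using lim' by simp
    show "AE x in lborel. norm (indicator {a..b} x * s i x) \<le> indicator {a..b} x * B" for i
      using B by (auto simp: indicator_def)
  qed
  then show "(\<lambda>i. LBINT x=a..b. s i x) \<longlonglongrightarrow> (LBINT x=a..b. f x)"
    using ab by (simp add: LBINT_ind)
qed

lemma LBINT_power:
  fixes a x :: real
  assumes "a \<le> x"
  shows "(LBINT t=a..x. (t - a) ^ n) = (x - a) ^ Suc n / Suc n"
proof -
  have "(LBINT t=a..x. (t - a) ^ n) = (x - a) ^ Suc n / Suc n - (a - a) ^ Suc n / Suc n"
  proof (rule interval_integral_FTC_finite)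
    show "continuous_on {min a x..max a x} (\<lambda>t. (t - a) ^ n)" by (intro continuous_intros)
    fix t show "((\<lambda>t. (t - a) ^ Suc n / Suc n) has_vector_derivative (t - a) ^ n) (at t within {min a x..max a x})"
      unfolding has_real_derivative_iff_has_vector_derivative[symmetric]
      by (auto intro!: derivative_eq_intros simp del: power_Suc)
  qed
  then show ?thesis by simp
qed

lemma telescope_convergent:
  fixes X :: "nat \<Rightarrow> real"
  assumes "summable (\<lambda>n. X (Suc n) - X n)"
  shows "X \<longlonglongrightarrow> X 0 + (\<Sum>n. X (Suc n) - X n)"
proof -
  have "(\<lambda>n. \<Sum>i<n. X (Suc i) - X i) \<longlonglongrightarrow> (\<Sum>n. X (Suc n) - X n)"
    by (rule summable_LIMSEQ[OF assms])
  then have "(\<lambda>n. X 0 + (\<Sum>i<n. X (Suc i) - X i)) \<longlonglongrightarrow> X 0 + (\<Sum>n. X (Suc n) - X n)"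
    by (intro tendsto_add tendsto_const)
  moreover have "X 0 + (\<Sum>i<n. X (Suc i) - X i) = X n" for n
    by (simp add: sum_lessThan_telescope)
  ultimately show ?thesis by simp
qed


lemma ii_absI:
  fixes f :: "real \<Rightarrow> real"
  shows "interval_lebesgue_integrable lborel a b f \<Longrightarrow> interval_lebesgue_integrable lborel a b (\<lambda>x. \<bar>f x\<bar>)"
  unfolding interval_lebesgue_integrable_def by (auto intro: set_integrable_abs)

lemma q_ii:
  fixes q :: "real \<Rightarrow> real" and c d L :: real
  assumes cd: "c \<le> d" and qm: "q \<in> borel_measurable lborel" and qb: "\<And>x. \<bar>q x\<bar> \<le> L"
  shows "interval_lebesgue_integrable lborel c d q"
proof (rule ii_bounded_meas[OF cd])
  show "(\<lambda>x. indicator {c..d} x * q x) \<in> borel_measurable lborel"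
    using qm by measurable
  show "\<And>x. x \<in> {c..d} \<Longrightarrow> \<bar>q x\<bar> \<le> L" using qb by blast
qed

lemma arith_fact:
  fixes L D z :: real
  shows "L * D * L ^ n / fact n * (z / real (Suc n)) = D * (L ^ Suc n * z) / fact (Suc n)"
proof -
  have "fact (Suc n) = real (Suc n) * (fact n :: real)" by (simp add: fact_Suc)
  moreover have "(fact n :: real) \<noteq> 0" by simp
  ultimately show ?thesis by (simp add: field_simps)
qed

lemma ode_exists:
  fixes q :: "real \<Rightarrow> real" and a b K y0 p0 :: real
  assumes ab: "a \<le> b" and qm: "q \<in> borel_measurable lborel" and qb: "\<And>x. \<bar>q x\<bar> \<le> K"
  shows "\<exists>y p. ac a b y p \<and> ac a b p (\<lambda>x. q x * y x) \<and> y a = y0 \<and> p a = p0"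
proof -
  define L where "L = max 1 K"
  have L1: "1 \<le> L" by (simp add: L_def)
  have qL: "\<bar>q x\<bar> \<le> L" for x using qb[of x] by (simp add: L_def le_max_iff_disj)
  define P where "P = rec_nat ((\<lambda>x. y0), (\<lambda>x. p0))
      (\<lambda>n PQ. ((\<lambda>x. y0 + (LBINT t=a..x. snd PQ t)), (\<lambda>x. p0 + (LBINT t=a..x. q t * fst PQ t))))"
  define Y where "Y n = fst (P n)" for n
  define Q where "Q n = snd (P n)" for n
  have Y0: "Y 0 = (\<lambda>x. y0)" and Q0: "Q 0 = (\<lambda>x. p0)" by (simp_all add: Y_def Q_def P_def)
  have YS: "Y (Suc n) = (\<lambda>x. y0 + (LBINT t=a..x. Q n t))"
    and QS: "Q (Suc n) = (\<lambda>x. p0 + (LBINT t=a..x. q t * Y n t))" for n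
    by (simp_all add: Y_def Q_def P_def)
  have iic: "interval_lebesgue_integrable lborel a x G" if "continuous_on {a..b} G" "x \<in> {a..b}" for G x
    using that by (intro interval_integrable_continuous_on) (auto intro: continuous_on_subset)
  have iiq: "interval_lebesgue_integrable lborel a x (\<lambda>t. q t * G t)" if "continuous_on {a..b} G" "x \<in> {a..b}" for G x
    using that by (intro ii_mult_cont q_ii[OF _ qm qL]) (auto intro: continuous_on_subset)
  have cont: "continuous_on {a..b} (Y n) \<and> continuous_on {a..b} (Q n)" for n
  proof (induction n)
    case 0 show ?case by (simp add: Y0 Q0)
  next
    case (Suc n)
    have i1: "interval_lebesgue_integrable lborel a b (Q n)" using Suc ab by (intro iic) auto
    have i2: "interval_lebesgue_integrable lborel a b (\<lambda>t. q t * Y n t)" using Suc ab by (intro iiq) auto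
    show ?case unfolding YS QS
      by (intro conjI continuous_on_add continuous_on_const ii_cont[OF ab i1] ii_cont[OF ab i2])
  qed
  define D where "D = (\<bar>p0\<bar> + L * \<bar>y0\<bar>) * (b - a)"
  have D0: "0 \<le> D" unfolding D_def using ab L1 by auto
  have bound: "\<bar>Y (Suc n) x - Y n x\<bar> + \<bar>Q (Suc n) x - Q n x\<bar> \<le> D * (L * (x - a)) ^ n / fact n"
    if "x \<in> {a..b}" for n x
    using that
  proof (induction n arbitrary: x)
    case 0
    then have ax: "a \<le> x" "x \<le> b" by auto
    have "\<bar>Q 1 x - Q 0 x\<bar> = \<bar>LBINT t=a..x. q t * y0\<bar>" by (simp add: QS Q0 Y0)
    also have "\<dots> \<le> (LBINT t=a..x. \<bar>q t * y0\<bar>)"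
      by (rule ii_abs[OF ax(1)]) (use iiq[of "\<lambda>t. y0" x] 0 in auto)
    also have "\<dots> \<le> (LBINT t=a..x. L * \<bar>y0\<bar>)"
    proof (rule ii_mono[OF ax(1)])
      show "interval_lebesgue_integrable lborel a x (\<lambda>t. \<bar>q t * y0\<bar>)"
        using iiq[of "\<lambda>t. y0" x] 0 by (intro ii_absI) auto
      show "interval_lebesgue_integrable lborel a x (\<lambda>t. L * \<bar>y0\<bar>)" by simp
      show "\<bar>q t * y0\<bar> \<le> L * \<bar>y0\<bar>" for t by (simp add: abs_mult mult_right_mono qL)
    qed
    also have "\<dots> = L * \<bar>y0\<bar> * (x - a)" by simp
    finally have 1: "\<bar>Q 1 x - Q 0 x\<bar> \<le> L * \<bar>y0\<bar> * (x - a)" .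
    have 2: "\<bar>Y 1 x - Y 0 x\<bar> = \<bar>p0\<bar> * (x - a)" using ax by (simp add: YS Q0 Y0 abs_mult)
    have "(\<bar>p0\<bar> + L * \<bar>y0\<bar>) * (x - a) \<le> (\<bar>p0\<bar> + L * \<bar>y0\<bar>) * (b - a)"
      using ax L1 by (intro mult_left_mono) auto
    then have "L * \<bar>y0\<bar> * (x - a) + \<bar>p0\<bar> * (x - a) \<le> D"
      unfolding D_def by (simp add: algebra_simps)
    then show ?case using 1 2 by simp
  next
    case (Suc n)
    then have ax: "a \<le> x" "x \<le> b" by auto
    have cY: "continuous_on {a..b} (\<lambda>t. Y (Suc n) t - Y n t)" using cont by (intro continuous_intros) auto
    have cQ: "continuous_on {a..b} (\<lambda>t. Q (Suc n) t - Q n t)" using cont by (intro continuous_intros) auto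
    have eY: "Y (Suc (Suc n)) x - Y (Suc n) x = (LBINT t=a..x. Q (Suc n) t - Q n t)"
      using iic[OF conjunct2[OF cont] Suc.prems, of "Suc n"] iic[OF conjunct2[OF cont] Suc.prems, of n]
      by (simp add: YS interval_lebesgue_integral_diff(2))
    have eQ: "Q (Suc (Suc n)) x - Q (Suc n) x = (LBINT t=a..x. q t * (Y (Suc n) t - Y n t))"
      using iiq[OF conjunct1[OF cont] Suc.prems, of "Suc n"] iiq[OF conjunct1[OF cont] Suc.prems, of n]
      by (simp add: QS interval_lebesgue_integral_diff(2) right_diff_distrib)
    have jQ: "interval_lebesgue_integrable lborel a x (\<lambda>t. \<bar>Q (Suc n) t - Q n t\<bar>)"
      using iic[OF cQ Suc.prems] by (rule ii_absI)
    have jY: "interval_lebesgue_integrable lborel a x (\<lambda>t. L * \<bar>Y (Suc n) t - Y n t\<bar>)"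
      using ii_absI[OF iic[OF cY Suc.prems]] by simp
    have jqY: "interval_lebesgue_integrable lborel a x (\<lambda>t. q t * (Y (Suc n) t - Y n t))"
      by (rule iiq[OF cY Suc.prems])
    have "\<bar>Y (Suc (Suc n)) x - Y (Suc n) x\<bar> \<le> (LBINT t=a..x. \<bar>Q (Suc n) t - Q n t\<bar>)"
      unfolding eY by (rule ii_abs[OF ax(1) iic[OF cQ Suc.prems]])
    moreover have "\<bar>Q (Suc (Suc n)) x - Q (Suc n) x\<bar> \<le> (LBINT t=a..x. L * \<bar>Y (Suc n) t - Y n t\<bar>)"
    proof -
      have "\<bar>Q (Suc (Suc n)) x - Q (Suc n) x\<bar> \<le> (LBINT t=a..x. \<bar>q t * (Y (Suc n) t - Y n t)\<bar>)"
        unfolding eQ by (rule ii_abs[OF ax(1) jqY])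
      also have "\<dots> \<le> (LBINT t=a..x. L * \<bar>Y (Suc n) t - Y n t\<bar>)"
      proof (rule ii_mono[OF ax(1) _ jY])
        show "interval_lebesgue_integrable lborel a x (\<lambda>t. \<bar>q t * (Y (Suc n) t - Y n t)\<bar>)"
          using jqY by (rule ii_absI)
        show "\<bar>q t * (Y (Suc n) t - Y n t)\<bar> \<le> L * \<bar>Y (Suc n) t - Y n t\<bar>" for t
          by (simp add: abs_mult mult_right_mono qL)
      qed
      finally show ?thesis .
    qed
    ultimately have "\<bar>Y (Suc (Suc n)) x - Y (Suc n) x\<bar> + \<bar>Q (Suc (Suc n)) x - Q (Suc n) x\<bar>
        \<le> (LBINT t=a..x. \<bar>Q (Suc n) t - Q n t\<bar>) + (LBINT t=a..x. L * \<bar>Y (Suc n) t - Y n t\<bar>)" by linarith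
    also have "\<dots> = (LBINT t=a..x. \<bar>Q (Suc n) t - Q n t\<bar> + L * \<bar>Y (Suc n) t - Y n t\<bar>)"
      using jQ jY by (simp add: interval_lebesgue_integral_add(2))
    also have "\<dots> \<le> (LBINT t=a..x. L * (D * (L * (t - a)) ^ n / fact n))"
    proof (rule ii_mono[OF ax(1)])
      show "interval_lebesgue_integrable lborel a x (\<lambda>t. \<bar>Q (Suc n) t - Q n t\<bar> + L * \<bar>Y (Suc n) t - Y n t\<bar>)"
        using jQ jY by (rule interval_lebesgue_integral_add(1))
      show "interval_lebesgue_integrable lborel a x (\<lambda>t. L * (D * (L * (t - a)) ^ n / fact n))"
        by (intro interval_integrable_continuous_on ax continuous_intros) auto
      fix t assume t: "a < t" "t < x"
      then have "t \<in> {a..b}" using ax by auto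
      from Suc.IH[OF this] have "\<bar>Y (Suc n) t - Y n t\<bar> + \<bar>Q (Suc n) t - Q n t\<bar> \<le> D * (L * (t - a)) ^ n / fact n" .
      then have "L * (\<bar>Y (Suc n) t - Y n t\<bar> + \<bar>Q (Suc n) t - Q n t\<bar>) \<le> L * (D * (L * (t - a)) ^ n / fact n)"
        using L1 by (intro mult_left_mono) auto
      moreover have "\<bar>Q (Suc n) t - Q n t\<bar> \<le> L * \<bar>Q (Suc n) t - Q n t\<bar>"
        using L1 by (simp add: mult_right_mono[of 1 L, simplified])
      ultimately show "\<bar>Q (Suc n) t - Q n t\<bar> + L * \<bar>Y (Suc n) t - Y n t\<bar> \<le> L * (D * (L * (t - a)) ^ n / fact n)"
        by (simp add: algebra_simps)
    qed
    also have "(LBINT t=a..x. L * (D * (L * (t - a)) ^ n / fact n)) = (LBINT t=a..x. (L * D * L ^ n / fact n) * (t - a) ^ n)"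
      by (simp add: power_mult_distrib)
    also have "\<dots> = L * D * L ^ n / fact n * (LBINT t=a..x. (t - a) ^ n)"
      by (rule interval_lebesgue_integral_mult_right)
    also have "\<dots> = L * D * L ^ n / fact n * ((x - a) ^ Suc n / Suc n)"
      using LBINT_power[OF ax(1), of n] by simp
    also have "\<dots> = D * (L ^ Suc n * (x - a) ^ Suc n) / fact (Suc n)"
      using arith_fact[of L D n "(x - a) ^ Suc n"] .
    also have "\<dots> = D * (L * (x - a)) ^ Suc n / fact (Suc n)"
      by (simp only: power_mult_distrib)
    finally show ?case .
  qed

  define g where "g n = D * (L * (b - a)) ^ n / fact n" for n
  have gs: "summable g"
  proof -
    have "summable (\<lambda>n. (L * (b - a)) ^ n /\<^sub>R fact n)" by (rule summable_exp_generic)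
    then have "summable (\<lambda>n. D * ((L * (b - a)) ^ n /\<^sub>R fact n))" by (rule summable_mult)
    moreover have "g = (\<lambda>n. D * ((L * (b - a)) ^ n /\<^sub>R fact n))"
      by (rule ext) (simp add: g_def divide_inverse mult.commute mult.left_commute)
    ultimately show ?thesis by simp
  qed
  have g0: "0 \<le> g n" for n unfolding g_def using D0 L1 ab by auto
  have dle: "\<bar>Y (Suc n) x - Y n x\<bar> \<le> g n \<and> \<bar>Q (Suc n) x - Q n x\<bar> \<le> g n" if x: "x \<in> {a..b}" for n x
  proof -
    have "(L * (x - a)) ^ n \<le> (L * (b - a)) ^ n"
      using x L1 by (intro power_mono mult_left_mono) auto
    then have "D * (L * (x - a)) ^ n / fact n \<le> g n"
      unfolding g_def using D0 by (intro divide_right_mono mult_left_mono) auto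
    then show ?thesis using bound[OF x, of n] by auto
  qed
  define S where "S = suminf g"
  define Yl where "Yl x = y0 + (\<Sum>n. Y (Suc n) x - Y n x)" for x
  define Ql where "Ql x = p0 + (\<Sum>n. Q (Suc n) x - Q n x)" for x
  have Ylim: "(\<lambda>n. Y n x) \<longlonglongrightarrow> Yl x" and Qlim: "(\<lambda>n. Q n x) \<longlonglongrightarrow> Ql x" if x: "x \<in> {a..b}" for x
  proof -
    have "summable (\<lambda>n. Y (Suc n) x - Y n x)"
      by (rule summable_comparison_test'[OF gs]) (use dle[OF x] in auto)
    from telescope_convergent[OF this] show "(\<lambda>n. Y n x) \<longlonglongrightarrow> Yl x" by (simp add: Yl_def Y0)
    have "summable (\<lambda>n. Q (Suc n) x - Q n x)"
      by (rule summable_comparison_test'[OF gs]) (use dle[OF x] in auto)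
    from telescope_convergent[OF this] show "(\<lambda>n. Q n x) \<longlonglongrightarrow> Ql x" by (simp add: Ql_def Q0)
  qed
  have sumle: "(\<Sum>k<n. g k) \<le> S" for n
    unfolding S_def by (rule sum_le_suminf[OF gs]) (auto intro: g0)
  define Bd where "Bd = \<bar>y0\<bar> + \<bar>p0\<bar> + S"
  have Bnd: "\<bar>Y n x\<bar> \<le> Bd \<and> \<bar>Q n x\<bar> \<le> Bd" if x: "x \<in> {a..b}" for n x
  proof -
    have tY: "Y n x = y0 + (\<Sum>k<n. Y (Suc k) x - Y k x)" using sum_lessThan_telescope[of "\<lambda>k. Y k x" n] by (simp add: Y0)
    have tQ: "Q n x = p0 + (\<Sum>k<n. Q (Suc k) x - Q k x)" using sum_lessThan_telescope[of "\<lambda>k. Q k x" n] by (simp add: Q0)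
    have "\<bar>\<Sum>k<n. Y (Suc k) x - Y k x\<bar> \<le> (\<Sum>k<n. g k)"
      by (rule order_trans[OF sum_abs sum_mono]) (use dle[OF x] in auto)
    moreover have "\<bar>\<Sum>k<n. Q (Suc k) x - Q k x\<bar> \<le> (\<Sum>k<n. g k)"
      by (rule order_trans[OF sum_abs sum_mono]) (use dle[OF x] in auto)
    ultimately show ?thesis using sumle[of n] unfolding Bd_def tY tQ by auto
  qed
  have eqY: "Yl x = y0 + (LBINT t=a..x. Ql t) \<and> interval_lebesgue_integrable lborel a x Ql" if x: "x \<in> {a..b}" for x
  proof -
    have ax: "a \<le> x" using x by auto
    have sub: "{a..x} \<subseteq> {a..b}" using x by auto
    have m: "(\<lambda>t. indicator {a..x} t * Q i t) \<in> borel_measurable lborel" for i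
      by (rule cont_meas) (rule continuous_on_subset[OF conjunct2[OF cont] sub])
    have lim1: "(\<lambda>i. Q i t) \<longlonglongrightarrow> Ql t" if "t \<in> {a..x}" for t using Qlim that sub by auto
    have bd1: "\<bar>Q i t\<bar> \<le> Bd" if "t \<in> {a..x}" for i t using Bnd that sub by auto
    note DC = ii_dom_conv[of a x "\<lambda>i. Q i" Ql Bd, OF ax m lim1 bd1]
    have DC1: "interval_lebesgue_integrable lborel a x Ql"
      and DC2: "(\<lambda>i. LBINT t=a..x. Q i t) \<longlonglongrightarrow> (LBINT t=a..x. Ql t)"
      using DC by auto
    have "(\<lambda>i. Y (Suc i) x) \<longlonglongrightarrow> y0 + (LBINT t=a..x. Ql t)"
      unfolding YS by (intro tendsto_add tendsto_const DC2)
    moreover have "(\<lambda>i. Y (Suc i) x) \<longlonglongrightarrow> Yl x" by (rule LIMSEQ_Suc[OF Ylim[OF x]])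
    ultimately show ?thesis using DC1 LIMSEQ_unique by blast
  qed
  have eqQ: "Ql x = p0 + (LBINT t=a..x. q t * Yl t) \<and> interval_lebesgue_integrable lborel a x (\<lambda>t. q t * Yl t)"
    if x: "x \<in> {a..b}" for x
  proof -
    have ax: "a \<le> x" using x by auto
    have sub: "{a..x} \<subseteq> {a..b}" using x by auto
    have m: "(\<lambda>t. indicator {a..x} t * (q t * Y i t)) \<in> borel_measurable lborel" for i
    proof -
      have "(\<lambda>t. q t * (indicator {a..x} t * Y i t)) \<in> borel_measurable lborel"
        by (intro borel_measurable_times qm cont_meas) (rule continuous_on_subset[OF conjunct1[OF cont] sub])
      then show ?thesis by (simp add: algebra_simps)
    qed
    have lim2: "(\<lambda>i. q t * Y i t) \<longlonglongrightarrow> q t * Yl t" if "t \<in> {a..x}" for t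
      using that sub by (intro tendsto_mult_left Ylim) auto
    have bd2: "\<bar>q t * Y i t\<bar> \<le> L * Bd" if "t \<in> {a..x}" for i t
    proof -
      have "\<bar>Y i t\<bar> \<le> Bd" using Bnd that sub by auto
      then show ?thesis unfolding abs_mult using L1 by (intro mult_mono qL) auto
    qed
    have DC1: "interval_lebesgue_integrable lborel a x (\<lambda>t. q t * Yl t)"
      and DC2: "(\<lambda>i. LBINT t=a..x. q t * Y i t) \<longlonglongrightarrow> (LBINT t=a..x. q t * Yl t)"
      using ii_dom_conv[of a x "\<lambda>i t. q t * Y i t" "\<lambda>t. q t * Yl t" "L * Bd", OF ax m lim2 bd2] by auto
    have "(\<lambda>i. Q (Suc i) x) \<longlonglongrightarrow> p0 + (LBINT t=a..x. q t * Yl t)"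
      unfolding QS by (intro tendsto_add tendsto_const DC2)
    moreover have "(\<lambda>i. Q (Suc i) x) \<longlonglongrightarrow> Ql x" by (rule LIMSEQ_Suc[OF Qlim[OF x]])
    ultimately show ?thesis using DC1 LIMSEQ_unique by blast
  qed
  have Yla: "Yl a = y0" using eqY[of a] ab by simp
  have Qla: "Ql a = p0" using eqQ[of a] ab by simp
  have "ac a b Yl Ql"
  proof (rule acI[OF ab])
    show "interval_lebesgue_integrable lborel a b Ql" using eqY[of b] ab by simp
    show "Yl x = Yl a + (LBINT t=a..x. Ql t)" if "x \<in> {a..b}" for x using eqY[OF that] Yla by simp
  qed
  moreover have "ac a b Ql (\<lambda>x. q x * Yl x)"
  proof (rule acI[OF ab])
    show "interval_lebesgue_integrable lborel a b (\<lambda>x. q x * Yl x)" using eqQ[of b] ab by simp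
    show "Ql x = Ql a + (LBINT t=a..x. q t * Yl t)" if "x \<in> {a..b}" for x using eqQ[OF that] Qla by simp
  qed
  ultimately show ?thesis using Yla Qla by blast
qed

locale Uctx =
  fixes U :: "real \<Rightarrow> real" and c\<^sub>0 C :: real
  assumes Ck: "Ck_on 4 {-1<..<1} U"
    and c0: "c\<^sub>0 > 0"
    and Ud: "\<forall>y\<in>{-1<..<1}. deriv U y > c\<^sub>0"
    and U0: "U 0 = 0"
    and U20: "deriv (deriv U) 0 = 0"
    and VC: "\<forall>y\<in>{-1<..<1}. - C \<le> deriv (deriv U) y / U y \<and> deriv (deriv U) y / U y \<le> 0"
begin

definition "U1 = deriv U"
definition "U2 = deriv (deriv U)"
definition "V y = U2 y / U y"
definition "Vt y = (if y \<in> {-1<..<1} then V y else 0)"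

lemma U_der: "x \<in> {-1<..<1} \<Longrightarrow> (U has_real_derivative U1 x) (at x)"
proof -
  assume x: "x \<in> {-1<..<1}"
  have H: "\<forall>j<4. \<forall>x\<in>{-1<..<1}. (deriv ^^ j) U differentiable (at x)" using Ck unfolding Ck_on_def by blast
  have "((deriv ^^ 0) U) differentiable (at x)" by (rule H[rule_format]) (use x in auto)
  then show ?thesis unfolding U1_def by (simp add: DERIV_deriv_iff_real_differentiable)
qed

lemma U1_der: "x \<in> {-1<..<1} \<Longrightarrow> (U1 has_real_derivative U2 x) (at x)"
proof -
  assume x: "x \<in> {-1<..<1}"
  have H: "\<forall>j<4. \<forall>x\<in>{-1<..<1}. (deriv ^^ j) U differentiable (at x)" using Ck unfolding Ck_on_def by blast
  have "((deriv ^^ 1) U) differentiable (at x)" by (rule H[rule_format]) (use x in auto)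
  then show ?thesis unfolding U1_def U2_def by (simp add: DERIV_deriv_iff_real_differentiable)
qed

lemma U2_cont: "x \<in> {-1<..<1} \<Longrightarrow> isCont U2 x"
proof -
  assume x: "x \<in> {-1<..<1}"
  have H: "\<forall>j<4. \<forall>x\<in>{-1<..<1}. (deriv ^^ j) U differentiable (at x)" using Ck unfolding Ck_on_def by blast
  have "((deriv ^^ 2) U) differentiable (at x)" by (rule H[rule_format]) (use x in auto)
  then have "(U2 has_real_derivative deriv U2 x) (at x)"
    unfolding U2_def by (simp add: DERIV_deriv_iff_real_differentiable numeral_2_eq_2)
  then show ?thesis by (rule DERIV_isCont)
qed

lemma U_cont: "x \<in> {-1<..<1} \<Longrightarrow> isCont U x"
  using U_der DERIV_isCont by blast

lemma U1_cont: "x \<in> {-1<..<1} \<Longrightarrow> isCont U1 x"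
  using U1_der DERIV_isCont by blast

lemma U1_pos: "x \<in> {-1<..<1} \<Longrightarrow> U1 x > c\<^sub>0"
  using Ud unfolding U1_def by blast

lemma C_nonneg: "0 \<le> C"
  using VC[rule_format, of 0] U0 by simp

lemma U_pos: assumes "0 < x" "x < 1" shows "c\<^sub>0 * x \<le> U x"
proof -
  have "\<exists>z. 0 < z \<and> z < x \<and> U x - U 0 = (x - 0) * U1 z"
    by (rule MVT2) (use assms U_der in auto)
  then obtain z where z: "0 < z" "z < x" "U x = x * U1 z" using U0 by auto
  have "c\<^sub>0 < U1 z" using U1_pos z assms by auto
  then show ?thesis using z assms by (simp add: mult_left_mono mult.commute less_imp_le)
qed

lemma U_neg: assumes "-1 < x" "x < 0" shows "U x \<le> c\<^sub>0 * x"
proof -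
  have "\<exists>z. x < z \<and> z < 0 \<and> U 0 - U x = (0 - x) * U1 z"
    by (rule MVT2) (use assms U_der in auto)
  then obtain z where z: "x < z" "z < 0" "U x = x * U1 z" using U0 by auto
  have "c\<^sub>0 < U1 z" using U1_pos z assms by auto
  then show ?thesis using z assms by (simp add: mult_left_mono_neg mult.commute less_imp_le)
qed

lemma U_nz: assumes "x \<in> {-1<..<1}" "x \<noteq> 0" shows "U x \<noteq> 0"
proof (cases "x > 0")
  case True
  then have "0 < c\<^sub>0 * x" using c0 by simp
  then show ?thesis using U_pos[of x] True assms by auto
next
  case False
  then have "x < 0" using assms by auto
  then have "c\<^sub>0 * x < 0" using c0 by (simp add: mult_pos_neg)
  then show ?thesis using U_neg[of x] \<open>x < 0\<close> assms by auto
qed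

lemma V_bound: "x \<in> {-1<..<1} \<Longrightarrow> -C \<le> V x \<and> V x \<le> 0"
  using VC unfolding V_def U2_def by blast

lemma Vt_bound: "\<bar>Vt x\<bar> \<le> C"
  using V_bound[of x] C_nonneg unfolding Vt_def by auto

lemma V0: "V 0 = 0" by (simp add: V_def U0)

lemma V_cont: "x \<in> {-1<..<1} \<Longrightarrow> x \<noteq> 0 \<Longrightarrow> isCont V x"
  unfolding V_def[abs_def] by (intro continuous_intros U2_cont U_cont U_nz)

lemma Vt_meas: "Vt \<in> borel_measurable lborel"
proof -
  let ?A = "{-1<..<1} - {0::real}"
  have "continuous_on ?A V" by (intro continuous_at_imp_continuous_on ballI V_cont) auto
  then have m: "(\<lambda>x. indicator ?A x *\<^sub>R V x) \<in> borel_measurable borel"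
    by (intro borel_measurable_continuous_on_indicator) auto
  have "Vt = (\<lambda>x. indicator ?A x *\<^sub>R V x)"
    by (rule ext) (auto simp: Vt_def indicator_def V0)
  then show ?thesis using m by simp
qed

end

lemma ii_cong:
  fixes a b :: real
  assumes "a \<le> b" "\<And>x. a < x \<Longrightarrow> x < b \<Longrightarrow> f x = g x" "interval_lebesgue_integrable lborel a b f"
  shows "interval_lebesgue_integrable lborel a b g"
proof -
  have "set_integrable lborel {a<..<b} f = set_integrable lborel {a<..<b} g"
    by (rule set_integrable_cong) (use assms in auto)
  then show ?thesis using assms by (simp add: interval_lebesgue_integrable_def)
qed

lemma LBINT_cong:
  fixes a b :: real
  assumes "a \<le> b" "\<And>x. a < x \<Longrightarrow> x < b \<Longrightarrow> f x = g x"
  shows "(LBINT x=a..b. f x) = (LBINT x=a..b. g x)"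
  by (rule interval_lebesgue_integral_cong) (use assms in auto)

context Uctx begin

lemma Vt_ii: fixes a b :: real shows "a \<le> b \<Longrightarrow> interval_lebesgue_integrable lborel a b Vt"
  by (rule q_ii[OF _ Vt_meas Vt_bound])

lemma V_ii:
  fixes a b :: real and G :: "real \<Rightarrow> real"
  assumes "-1 \<le> a" "a \<le> b" "b \<le> 1" "continuous_on {a..b} G"
  shows "interval_lebesgue_integrable lborel a b (\<lambda>x. V x * G x)"
proof (rule ii_cong[OF assms(2)])
  show "interval_lebesgue_integrable lborel a b (\<lambda>x. Vt x * G x)"
    by (rule ii_mult_cont[OF assms(2) Vt_ii[OF assms(2)] assms(4)])
  show "Vt x * G x = V x * G x" if "a < x" "x < b" for x using that assms by (simp add: Vt_def)
qed

lemma ground: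
  fixes f f' :: "real \<Rightarrow> real" and a b :: real
  assumes ab: "-1 < a" "a \<le> b" "b < 1" and nz: "\<And>x. x \<in> {a..b} \<Longrightarrow> U x \<noteq> 0"
    and f: "ac a b f f'" and f2: "interval_lebesgue_integrable lborel a b (\<lambda>x. f' x ^ 2)"
  shows "interval_lebesgue_integrable lborel a b (\<lambda>x. f' x ^ 2 + V x * f x ^ 2)"
    and "interval_lebesgue_integrable lborel a b (\<lambda>x. (f' x - U1 x * f x / U x) ^ 2)"
    and "(LBINT x=a..b. f' x ^ 2 + V x * f x ^ 2) = (LBINT x=a..b. (f' x - U1 x * f x / U x) ^ 2)
           + U1 b * f b ^ 2 / U b - U1 a * f a ^ 2 / U a"
proof -
  have S: "x \<in> {-1<..<1}" if "x \<in> {a..b}" for x using that ab by auto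
  have cU2: "continuous_on {a..b} U2" by (intro continuous_at_imp_continuous_on ballI U2_cont S)
  have cU1: "continuous_on {a..b} U1" by (intro continuous_at_imp_continuous_on ballI U1_cont S)
  have cU: "continuous_on {a..b} U" by (intro continuous_at_imp_continuous_on ballI U_cont S)
  have acU1: "ac a b U1 U2"
    by (rule ac_FTC[OF ab(2) cU2]) (use U1_der S in \<open>auto intro: has_field_derivative_at_within\<close>)
  have dW: "((\<lambda>x. 1 / U x) has_real_derivative (- U1 x / (U x) ^ 2)) (at x within {a..b})" if x: "x \<in> {a..b}" for x
  proof -
    have "((\<lambda>x. inverse (U x)) has_real_derivative (- (U1 x * inverse (U x ^ Suc (Suc 0))))) (at x within {a..b})"
      by (rule DERIV_inverse_fun[OF has_field_derivative_at_within[OF U_der[OF S[OF x]]] nz[OF x]])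
    then show ?thesis by (simp add: inverse_eq_divide power2_eq_square)
  qed
  have cW': "continuous_on {a..b} (\<lambda>x. - U1 x / (U x) ^ 2)"
    by (intro continuous_intros cU1 cU) (use nz in auto)
  have acW: "ac a b (\<lambda>x. 1 / U x) (\<lambda>x. - U1 x / (U x) ^ 2)" by (rule ac_FTC[OF ab(2) cW' dW])
  have acff: "ac a b (\<lambda>x. f x * f x) (\<lambda>x. f' x * f x + f x * f' x)" by (rule ac_mult[OF f f])
  note acG = ac_mult[OF acff acW]
  note IBP = ac_ibp[OF acU1 acG]
  define r where "r x = U2 x * (f x * f x * (1 / U x)) + U1 x * ((f' x * f x + f x * f' x) * (1 / U x) + f x * f x * (- U1 x / (U x) ^ 2))" for x
  have ir: "interval_lebesgue_integrable lborel a b r" using IBP(1) unfolding r_def .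
  have Ir: "(LBINT x=a..b. r x) = U1 b * f b ^ 2 / U b - U1 a * f a ^ 2 / U a"
    using IBP(2) unfolding r_def by (simp add: power2_eq_square)
  have cf2: "continuous_on {a..b} (\<lambda>x. f x ^ 2)" using ac_cont[OF f] by (intro continuous_intros)
  have iVf: "interval_lebesgue_integrable lborel a b (\<lambda>x. V x * f x ^ 2)"
    by (rule V_ii) (use ab cf2 in auto)
  show ih: "interval_lebesgue_integrable lborel a b (\<lambda>x. f' x ^ 2 + V x * f x ^ 2)"
    using f2 iVf by (rule interval_lebesgue_integral_add(1))
  have pw: "(f' x - U1 x * f x / U x) ^ 2 = (f' x ^ 2 + V x * f x ^ 2) - r x" if "a < x" "x < b" for x
  proof -
    have "U x \<noteq> 0" using nz that by auto
    then show ?thesis unfolding r_def V_def by (simp add: field_simps power2_eq_square)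
  qed
  have ik: "interval_lebesgue_integrable lborel a b (\<lambda>x. (f' x ^ 2 + V x * f x ^ 2) - r x)"
    using ih ir by (rule interval_lebesgue_integral_diff(1))
  show "interval_lebesgue_integrable lborel a b (\<lambda>x. (f' x - U1 x * f x / U x) ^ 2)"
    by (rule ii_cong[OF ab(2) _ ik]) (use pw in auto)
  have "(LBINT x=a..b. (f' x - U1 x * f x / U x) ^ 2) = (LBINT x=a..b. (f' x ^ 2 + V x * f x ^ 2) - r x)"
    by (rule LBINT_cong[OF ab(2)]) (use pw in auto)
  also have "\<dots> = (LBINT x=a..b. f' x ^ 2 + V x * f x ^ 2) - (LBINT x=a..b. r x)"
    using ih ir by (rule interval_lebesgue_integral_diff(2))
  finally show "(LBINT x=a..b. f' x ^ 2 + V x * f x ^ 2) = (LBINT x=a..b. (f' x - U1 x * f x / U x) ^ 2)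
           + U1 b * f b ^ 2 / U b - U1 a * f a ^ 2 / U a" using Ir by simp
qed

end

lemma quad_disc:
  fixes A B Cc :: real
  assumes H: "\<And>t. 0 \<le> A - 2 * t * B + t\<^sup>2 * Cc" and C0: "0 \<le> Cc"
  shows "B\<^sup>2 \<le> A * Cc"
proof (cases "Cc = 0")
  case True
  have "B = 0"
  proof (rule ccontr)
    assume "B \<noteq> 0"
    have "0 \<le> A - 2 * ((A + 1) / (2 * B)) * B" using H[of "(A + 1) / (2 * B)"] True by simp
    also have "\<dots> = -1" using \<open>B \<noteq> 0\<close> by (simp add: field_simps)
    finally show False by simp
  qed
  then show ?thesis using True by simp
next
  case False
  then have Cp: "0 < Cc" using C0 by simp
  have "0 \<le> A - 2 * (B / Cc) * B + (B / Cc)\<^sup>2 * Cc" by (rule H)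
  also have "\<dots> = A - B\<^sup>2 / Cc" using Cp by (simp add: field_simps power2_eq_square)
  finally have "B\<^sup>2 / Cc \<le> A" by simp
  then show ?thesis using Cp by (simp add: field_simps)
qed

lemma CS_ii:
  fixes f g :: "real \<Rightarrow> real" and a b :: real
  assumes ab: "a \<le> b" and f2: "interval_lebesgue_integrable lborel a b (\<lambda>x. f x ^ 2)"
    and g2: "interval_lebesgue_integrable lborel a b (\<lambda>x. g x ^ 2)"
    and fg: "interval_lebesgue_integrable lborel a b (\<lambda>x. f x * g x)"
  shows "(LBINT x=a..b. f x * g x)\<^sup>2 \<le> (LBINT x=a..b. f x ^ 2) * (LBINT x=a..b. g x ^ 2)"
proof (rule quad_disc)
  show "0 \<le> (LBINT x=a..b. g x ^ 2)" by (rule ii_nonneg[OF ab]) simp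
  fix t :: real
  define c where "c = - 2 * t"
  have i1: "interval_lebesgue_integrable lborel a b (\<lambda>x. c * (f x * g x))" using fg by (intro interval_lebesgue_integrable_mult_right)
  have i2: "interval_lebesgue_integrable lborel a b (\<lambda>x. t\<^sup>2 * g x ^ 2)" using g2 by simp
  have i12: "interval_lebesgue_integrable lborel a b (\<lambda>x. f x ^ 2 + c * (f x * g x))"
    using f2 i1 by (rule interval_lebesgue_integral_add(1))
  have "0 \<le> (LBINT x=a..b. (f x - t * g x)\<^sup>2)" by (rule ii_nonneg[OF ab]) simp
  also have "\<dots> = (LBINT x=a..b. (f x ^ 2 + c * (f x * g x)) + t\<^sup>2 * g x ^ 2)"
    by (simp add: power2_eq_square algebra_simps c_def)
  also have "\<dots> = (LBINT x=a..b. f x ^ 2 + c * (f x * g x)) + (LBINT x=a..b. t\<^sup>2 * g x ^ 2)"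
    by (rule interval_lebesgue_integral_add(2)[OF i12 i2])
  also have "(LBINT x=a..b. f x ^ 2 + c * (f x * g x)) = (LBINT x=a..b. f x ^ 2) + (LBINT x=a..b. c * (f x * g x))"
    by (rule interval_lebesgue_integral_add(2)[OF f2 i1])
  also have "(LBINT x=a..b. c * (f x * g x)) = c * (LBINT x=a..b. f x * g x)" by simp
  also have "(LBINT x=a..b. t\<^sup>2 * g x ^ 2) = t\<^sup>2 * (LBINT x=a..b. g x ^ 2)" by simp
  finally show "0 \<le> (LBINT x=a..b. f x ^ 2) - 2 * t * (LBINT x=a..b. f x * g x) + t\<^sup>2 * (LBINT x=a..b. g x ^ 2)"
    by (simp add: c_def)
qed

lemma CS1:
  fixes f :: "real \<Rightarrow> real" and a b :: real
  assumes ab: "a \<le> b" and f: "interval_lebesgue_integrable lborel a b f"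
    and f2: "interval_lebesgue_integrable lborel a b (\<lambda>x. f x ^ 2)"
  shows "(LBINT x=a..b. f x)\<^sup>2 \<le> (b - a) * (LBINT x=a..b. f x ^ 2)"
  using CS_ii[OF ab f2, of "\<lambda>x. 1"] f ab by (simp add: mult.commute)

context Uctx begin

lemma posR:
  fixes f f' :: "real \<Rightarrow> real"
  assumes f: "ac 0 1 f f'" and f0: "f 0 = 0" and f1: "f 1 = 0"
    and f2: "interval_lebesgue_integrable lborel (0::real) (1::real) (\<lambda>x. f' x ^ 2)"
  shows "interval_lebesgue_integrable lborel (0::real) (1::real) (\<lambda>x. f' x ^ 2 + V x * f x ^ 2)"
    and "0 \<le> (LBINT x=(0::real)..(1::real). f' x ^ 2 + V x * f x ^ 2)"
proof -
  define h where "h x = f' x ^ 2 + V x * f x ^ 2" for x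
  have cf2: "continuous_on {0..1} (\<lambda>x. f x ^ 2)" using ac_cont[OF f] by (intro continuous_intros)
  have ih: "interval_lebesgue_integrable lborel (0::real) (1::real) h"
    unfolding h_def by (intro interval_lebesgue_integral_add(1) f2 V_ii[of 0 1 "\<lambda>x. f x ^ 2"] cf2) auto
  then show "interval_lebesgue_integrable lborel (0::real) (1::real) (\<lambda>x. f' x ^ 2 + V x * f x ^ 2)" unfolding h_def .
  define H where "H x = (LBINT t=(0::real)..(x::real). h t)" for x
  have acH: "ac 0 1 H h" by (rule acI) (auto simp: H_def ih)
  have cH: "continuous_on {0..1} H" by (rule ac_cont[OF acH])
  define E where "E x = (LBINT t=(0::real)..(x::real). f' t ^ 2)" for x
  have acE: "ac 0 1 E (\<lambda>x. f' x ^ 2)" by (rule acI) (auto simp: E_def f2)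
  have cE: "continuous_on {0..1} E" by (rule ac_cont[OF acE])
  define T where "T x = U1 x * f x ^ 2 / U x" for x
  have step1: "- T a \<le> H b - H a" if ab: "0 < a" "a \<le> b" "b < 1" for a b
  proof -
    have nz: "U x \<noteq> 0" if "x \<in> {a..b}" for x
    proof -
      have "0 < c\<^sub>0 * x" using that ab c0 by (intro mult_pos_pos) auto
      then show ?thesis using U_pos[of x] that ab by auto
    qed
    have facs: "ac a b f f'" by (rule ac_sub[OF f]) (use ab in auto)
    have f2s: "interval_lebesgue_integrable lborel a b (\<lambda>x. f' x ^ 2)" by (rule ii_sub[OF _ _ _ f2]) (use ab in auto)
    note G = ground[OF _ ab(2) ab(3) nz facs f2s]
    have "H a + (LBINT t=a..b. h t) = H b"
      unfolding H_def by (rule interval_integral_sum) (use ii_sub[OF _ _ _ ih, of 0 b] ab in \<open>auto simp: min_def max_def\<close>)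
    moreover have "0 \<le> (LBINT x=a..b. (f' x - U1 x * f x / U x) ^ 2)" by (rule ii_nonneg) (use ab in auto)
    moreover have "0 \<le> U1 b * f b ^ 2 / U b"
    proof -
      have "0 < U1 b" using U1_pos[of b] c0 ab by auto
      moreover have "0 < U b"
      proof -
        have "0 < c\<^sub>0 * b" using c0 ab by (intro mult_pos_pos) auto
        then show ?thesis using U_pos[of b] ab by auto
      qed
      ultimately show ?thesis by simp
    qed
    ultimately show ?thesis using G(3) ab unfolding T_def h_def by simp
  qed
  have step2: "H a - T a \<le> H 1" if a: "0 < a" "a < 1" for a
  proof -
    have "((\<lambda>b. H b - H a) \<longlongrightarrow> H 1 - H a) (at_left 1)"
      by (intro tendsto_diff tendsto_const continuous_on_Icc_at_leftD[OF cH]) simp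
    moreover have "eventually (\<lambda>b. - T a \<le> H b - H a) (at_left 1)"
      using eventually_at_left_real[OF a(2)] by eventually_elim (use step1 a in auto)
    ultimately have "- T a \<le> H 1 - H a" by (rule tendsto_lowerbound) simp
    then show ?thesis by simp
  qed
  have ev: "eventually (\<lambda>x. x \<in> {0<..<1}) (at_right (0::real))" by (rule eventually_at_right_real) simp
  have Tlim: "(T \<longlongrightarrow> 0) (at_right 0)"
  proof (rule tendsto_sandwich[of "\<lambda>_. 0" T _ "\<lambda>a. U1 a * E a / c\<^sub>0"])
    have bnd: "0 \<le> T a \<and> T a \<le> U1 a * E a / c\<^sub>0" if a: "0 < a" "a < 1" for a
    proof -
      have facs: "ac 0 a f f'" by (rule ac_sub[OF f]) (use a in auto)
      have fa: "f a = (LBINT t=(0::real)..a. f' t)" using acD(3)[OF facs, of a] f0 a by simp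
      have "f a ^ 2 \<le> (a - 0) * E a"
        unfolding fa E_def by (rule CS1) (use acD(2)[OF facs] ii_sub[OF _ _ _ f2, of 0 a] a in auto)
      then have fa2: "f a ^ 2 \<le> a * E a" by simp
      have Ua: "c\<^sub>0 * a \<le> U a" using U_pos a by auto
      have Ua0: "0 < c\<^sub>0 * a" using a c0 by simp
      have U1a: "0 < U1 a" using U1_pos[of a] c0 a by auto
      have Ea: "0 \<le> E a" unfolding E_def by (rule ii_nonneg) (use a in auto)
      have "f a ^ 2 / U a \<le> (a * E a) / (c\<^sub>0 * a)"
        by (rule frac_le) (use fa2 Ua Ua0 Ea a in auto)
      also have "\<dots> = E a / c\<^sub>0" using a by simp
      finally have "f a ^ 2 / U a \<le> E a / c\<^sub>0" .
      then have "U1 a * (f a ^ 2 / U a) \<le> U1 a * (E a / c\<^sub>0)" using U1a by (intro mult_left_mono) auto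
      moreover have "0 \<le> U1 a * (f a ^ 2 / U a)" using U1a Ua Ua0 by simp
      ultimately show ?thesis unfolding T_def by simp
    qed
    show "eventually (\<lambda>a. 0 \<le> T a) (at_right 0)"
      using ev by eventually_elim (use bnd in auto)
    show "eventually (\<lambda>a. T a \<le> U1 a * E a / c\<^sub>0) (at_right 0)"
      using ev by eventually_elim (use bnd in auto)
    show "((\<lambda>_. 0) \<longlongrightarrow> (0::real)) (at_right 0)" by simp
    have "(U1 \<longlongrightarrow> U1 0) (at_right 0)"
    proof -
      have "isCont U1 0" by (rule U1_cont) simp
      then have "(U1 \<longlongrightarrow> U1 0) (at 0)" by (simp add: isCont_def)
      then show ?thesis by (rule tendsto_mono[OF at_le[OF subset_UNIV], rotated])
    qed
    moreover have "(E \<longlongrightarrow> E 0) (at_right 0)" by (rule continuous_on_Icc_at_rightD[OF cE]) simp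
    ultimately have "((\<lambda>a. U1 a * E a / c\<^sub>0) \<longlongrightarrow> U1 0 * E 0 / c\<^sub>0) (at_right 0)"
      using c0 by (intro tendsto_intros) auto
    then show "((\<lambda>a. U1 a * E a / c\<^sub>0) \<longlongrightarrow> 0) (at_right 0)" by (simp add: E_def)
  qed
  have "((\<lambda>a. H a - T a) \<longlongrightarrow> H 0 - 0) (at_right 0)"
    by (intro tendsto_diff Tlim continuous_on_Icc_at_rightD[OF cH]) simp
  moreover have "eventually (\<lambda>a. H a - T a \<le> H 1) (at_right 0)"
    using ev by eventually_elim (use step2 in auto)
  ultimately have "H 0 - 0 \<le> H 1" by (rule tendsto_upperbound) simp
  then show "0 \<le> (LBINT x=(0::real)..(1::real). f' x ^ 2 + V x * f x ^ 2)" by (simp add: H_def h_def)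
qed


lemma posL:
  fixes f f' :: "real \<Rightarrow> real"
  assumes f: "ac (-1) 0 f f'" and fm1: "f (-1) = 0" and f0: "f 0 = 0"
    and f2: "interval_lebesgue_integrable lborel (-1::real) (0::real) (\<lambda>x. f' x ^ 2)"
  shows "interval_lebesgue_integrable lborel (-1::real) (0::real) (\<lambda>x. f' x ^ 2 + V x * f x ^ 2)"
    and "0 \<le> (LBINT x=(-1::real)..(0::real). f' x ^ 2 + V x * f x ^ 2)"
proof -
  define h where "h x = f' x ^ 2 + V x * f x ^ 2" for x
  have cf2: "continuous_on {-1..0} (\<lambda>x. f x ^ 2)" using ac_cont[OF f] by (intro continuous_intros)
  have ih: "interval_lebesgue_integrable lborel (-1::real) (0::real) h"
    unfolding h_def by (intro interval_lebesgue_integral_add(1) f2 V_ii[of "-1" 0 "\<lambda>x. f x ^ 2"] cf2) auto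
  then show "interval_lebesgue_integrable lborel (-1::real) (0::real) (\<lambda>x. f' x ^ 2 + V x * f x ^ 2)" unfolding h_def .
  define H where "H x = (LBINT t=(-1::real)..(x::real). h t)" for x
  have acH: "ac (-1) 0 H h" by (rule acI) (auto simp: H_def ih)
  have cH: "continuous_on {-1..0} H" by (rule ac_cont[OF acH])
  define E where "E x = (LBINT t=(-1::real)..(x::real). f' t ^ 2)" for x
  have acE: "ac (-1) 0 E (\<lambda>x. f' x ^ 2)" by (rule acI) (auto simp: E_def f2)
  have cE: "continuous_on {-1..0} E" by (rule ac_cont[OF acE])
  define T where "T x = U1 x * f x ^ 2 / U x" for x
  have Uneg: "U x < 0" if "-1 < x" "x < 0" for x
  proof -
    have "c\<^sub>0 * x < 0" using that c0 by (simp add: mult_pos_neg)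
    then show ?thesis using U_neg[of x] that by auto
  qed
  have step1: "T b \<le> H b - H a" if ab: "-1 < a" "a \<le> b" "b < 0" for a b
  proof -
    have nz: "U x \<noteq> 0" if "x \<in> {a..b}" for x using Uneg[of x] that ab by auto
    have facs: "ac a b f f'" by (rule ac_sub[OF f]) (use ab in auto)
    have f2s: "interval_lebesgue_integrable lborel a b (\<lambda>x. f' x ^ 2)" by (rule ii_sub[OF _ _ _ f2]) (use ab in auto)
    note G = ground[OF _ ab(2) _ nz facs f2s]
    have "H a + (LBINT t=a..b. h t) = H b"
      unfolding H_def by (rule interval_integral_sum) (use ii_sub[OF _ _ _ ih, of "-1" b] ab in \<open>auto simp: min_def max_def\<close>)
    moreover have "0 \<le> (LBINT x=a..b. (f' x - U1 x * f x / U x) ^ 2)" by (rule ii_nonneg) (use ab in auto)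
    moreover have "U1 a * f a ^ 2 / U a \<le> 0"
    proof -
      have "0 \<le> U1 a * f a ^ 2" using U1_pos[of a] c0 ab by auto
      moreover have "U a < 0" using Uneg ab by auto
      ultimately show ?thesis by (simp add: divide_le_0_iff)
    qed
    ultimately show ?thesis using G ab unfolding T_def h_def by simp
  qed
  have evR: "eventually (\<lambda>x. x \<in> {-1<..<b}) (at_right (-1::real))" if "-1 < b" for b
    by (rule eventually_at_right_real) (use that in simp)
  have step2: "T b \<le> H b" if b: "-1 < b" "b < 0" for b
  proof -
    have "((\<lambda>a. H b - H a) \<longlongrightarrow> H b - H (-1)) (at_right (-1))"
      by (intro tendsto_diff tendsto_const continuous_on_Icc_at_rightD[OF cH]) simp
    moreover have "eventually (\<lambda>a. T b \<le> H b - H a) (at_right (-1))"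
      using evR[OF b(1)] by eventually_elim (use step1 b in auto)
    ultimately have "T b \<le> H b - H (-1)" by (rule tendsto_lowerbound) simp
    then show ?thesis by (simp add: H_def)
  qed
  have ev: "eventually (\<lambda>x. x \<in> {-1<..<0}) (at_left (0::real))" by (rule eventually_at_left_real) simp
  have Tlim: "(T \<longlongrightarrow> 0) (at_left 0)"
  proof (rule tendsto_sandwich[of "\<lambda>b. - (U1 b * (E 0 - E b) / c\<^sub>0)" T _ "\<lambda>_. 0"])
    have bnd: "- (U1 b * (E 0 - E b) / c\<^sub>0) \<le> T b \<and> T b \<le> 0" if b: "-1 < b" "b < 0" for b
    proof -
      have facs: "ac b 0 f f'" by (rule ac_sub[OF f]) (use b in auto)
      have fb: "f b = - (LBINT t=b..(0::real). f' t)" using acD(3)[OF facs, of 0] f0 b by simp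
      have Eb: "E b + (LBINT t=b..(0::real). f' t ^ 2) = E 0"
        unfolding E_def by (rule interval_integral_sum) (use f2 b in \<open>auto simp: min_def max_def\<close>)
      have "(LBINT t=b..(0::real). f' t) ^ 2 \<le> (0 - b) * (LBINT t=b..(0::real). f' t ^ 2)"
        by (rule CS1) (use acD(2)[OF facs] ii_sub[OF _ _ _ f2, of b 0] b in auto)
      moreover have "f b ^ 2 = (LBINT t=b..(0::real). f' t) ^ 2" using fb by simp
      moreover have "(LBINT t=b..(0::real). f' t ^ 2) = E 0 - E b" using Eb by simp
      ultimately have fb2: "f b ^ 2 \<le> (- b) * (E 0 - E b)" by simp
      have E0b: "0 \<le> E 0 - E b"
      proof -
        have "0 \<le> (LBINT t=b..(0::real). f' t ^ 2)" by (rule ii_nonneg) (use b in auto)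
        then show ?thesis using Eb by simp
      qed
      have Ub: "c\<^sub>0 * (- b) \<le> - U b" using U_neg[of b] b by simp
      have Ub0: "0 < c\<^sub>0 * (- b)" using b c0 by (intro mult_pos_pos) auto
      have U1b: "0 < U1 b" using U1_pos[of b] c0 b by auto
      have "f b ^ 2 / (- U b) \<le> ((- b) * (E 0 - E b)) / (c\<^sub>0 * (- b))"
        by (rule frac_le) (use fb2 Ub Ub0 mult_nonneg_nonneg[of "- b" "E 0 - E b"] E0b b in auto)
      also have "\<dots> = (E 0 - E b) / c\<^sub>0" using b by simp
      finally have "f b ^ 2 / (- U b) \<le> (E 0 - E b) / c\<^sub>0" .
      then have "U1 b * (f b ^ 2 / (- U b)) \<le> U1 b * ((E 0 - E b) / c\<^sub>0)" using U1b by (intro mult_left_mono) auto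
      moreover have "0 \<le> U1 b * (f b ^ 2 / (- U b))" using U1b Ub Ub0 by (intro mult_nonneg_nonneg divide_nonneg_pos) auto
      moreover have "T b = - (U1 b * (f b ^ 2 / (- U b)))" unfolding T_def by simp
      ultimately show ?thesis by simp
    qed
    show "eventually (\<lambda>b. - (U1 b * (E 0 - E b) / c\<^sub>0) \<le> T b) (at_left 0)"
      using ev by eventually_elim (use bnd in auto)
    show "eventually (\<lambda>b. T b \<le> 0) (at_left 0)"
      using ev by eventually_elim (use bnd in auto)
    show "((\<lambda>_. 0) \<longlongrightarrow> (0::real)) (at_left 0)" by simp
    have "(U1 \<longlongrightarrow> U1 0) (at_left 0)"
    proof -
      have "isCont U1 0" by (rule U1_cont) simp
      then have "(U1 \<longlongrightarrow> U1 0) (at 0)" by (simp add: isCont_def)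
      then show ?thesis by (rule tendsto_mono[OF at_le[OF subset_UNIV], rotated])
    qed
    moreover have "(E \<longlongrightarrow> E 0) (at_left 0)" by (rule continuous_on_Icc_at_leftD[OF cE]) simp
    ultimately have "((\<lambda>b. - (U1 b * (E 0 - E b) / c\<^sub>0)) \<longlongrightarrow> - (U1 0 * (E 0 - E 0) / c\<^sub>0)) (at_left 0)"
      using c0 by (intro tendsto_intros) auto
    then show "((\<lambda>b. - (U1 b * (E 0 - E b) / c\<^sub>0)) \<longlongrightarrow> 0) (at_left 0)" by simp
  qed
  have Hlim: "(H \<longlongrightarrow> H 0) (at_left 0)" by (rule continuous_on_Icc_at_leftD[OF cH]) simp
  have "eventually (\<lambda>b. T b \<le> H b) (at_left 0)"
    using ev by eventually_elim (use step2 in auto)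
  then have "0 \<le> H 0" by (rule tendsto_le[OF _ Hlim Tlim, rotated]) simp
  then show "0 \<le> (LBINT x=(-1::real)..(0::real). f' x ^ 2 + V x * f x ^ 2)" by (simp add: H_def h_def)
qed

end

lemma Em1: "(-1::ereal) = ereal (-1)" by (simp add: one_ereal_def)
lemma E1: "(1::ereal) = ereal 1" by simp
lemma E0: "(0::ereal) = ereal 0" by simp

lemma abs_le_1_sq: fixes y :: real shows "\<bar>y\<bar> \<le> 1 + y\<^sup>2"
proof -
  have "0 \<le> (\<bar>y\<bar> - 1)\<^sup>2" by simp
  also have "(\<bar>y\<bar> - 1)\<^sup>2 = y\<^sup>2 - 2 * \<bar>y\<bar> + 1" by (simp add: power2_eq_square algebra_simps abs_mult_self_eq)
  finally have "2 * \<bar>y\<bar> \<le> y\<^sup>2 + 1" by simp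
  moreover have "0 \<le> y\<^sup>2" by simp
  ultimately show ?thesis by linarith
qed

lemma ii_join:
  fixes a b c :: real
  assumes "a \<le> b" "b \<le> c" "interval_lebesgue_integrable lborel a b f" "interval_lebesgue_integrable lborel b c f"
  shows "interval_lebesgue_integrable lborel a c f"
proof -
  have "set_integrable lborel ({a..b} \<union> {b..c}) f"
    using assms by (intro set_integrable_Un) (auto simp: ii_Icc)
  moreover have "{a..b} \<union> {b..c} = {a..c}" using assms by auto
  ultimately show ?thesis using assms ii_Icc[of a c f] by simp
qed

lemma sq_zero:
  fixes f :: "real \<Rightarrow> real" and a b :: real
  assumes ab: "a < b" and c: "continuous_on {a..b} f" and z: "(LBINT x=a..b. f x ^ 2) = 0"
  shows "\<And>x. x \<in> {a..b} \<Longrightarrow> f x = 0"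
proof -
  fix x assume x: "x \<in> {a..b}"
  have c2: "continuous_on {a..b} (\<lambda>x. f x ^ 2)" using c by (intro continuous_intros)
  have si: "set_integrable lborel {a..b} (\<lambda>x. f x ^ 2)" by (rule borel_integrable_atLeastAtMost'[OF c2])
  have "(LBINT x=a..b. f x ^ 2) = integral {a..b} (\<lambda>x. f x ^ 2)"
    using ab si by (intro interval_integral_eq_integral) auto
  then have "integral {a..b} (\<lambda>x. f x ^ 2) = 0" using z by simp
  moreover have "(\<lambda>x. f x ^ 2) integrable_on {a..b}" using set_borel_integral_eq_integral(1)[OF si] .
  ultimately have hi: "((\<lambda>x. f x ^ 2) has_integral 0) (cbox a b)" by (metis box_real(2) has_integral_integral)
  have "f x ^ 2 = 0"
    by (rule has_integral_0_cbox_imp_0[of a b "\<lambda>x. f x ^ 2"]) (use c2 hi ab x in auto)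
  then show "f x = 0" by simp
qed

context Uctx begin

lemma H10_ac:
  assumes "H10 f f'"
  shows "ac (-1) 1 f f'" "f (-1) = 0" "f 1 = 0" "interval_lebesgue_integrable lborel (-1::real) (1::real) (\<lambda>x. f' x ^ 2)"
    "f' \<in> borel_measurable lborel"
proof -
  have m: "f' \<in> borel_measurable lborel" and s2: "set_integrable lborel {-1..1} (\<lambda>x. (f' x)\<^sup>2)"
    and e: "\<forall>x\<in>{-1..1}. f x = (LBINT t=-1..x. f' t)" and f1: "f 1 = 0"
    using assms unfolding H10_def by auto
  show "f' \<in> borel_measurable lborel" by (rule m)
  show "f 1 = 0" by (rule f1)
  show i2: "interval_lebesgue_integrable lborel (-1::real) (1::real) (\<lambda>x. f' x ^ 2)"
    using s2 by (subst ii_Icc) auto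
  have "integrable lborel (\<lambda>x. indicator {-1..1} x * f' x)"
  proof (rule Bochner_Integration.integrable_bound)
    show "integrable lborel (\<lambda>x. indicator {-1..1} x * 1 + indicator {-1..1} x * (f' x)\<^sup>2)"
      using ind_const_int[of "-1" 1 1] s2 unfolding set_integrable_def by (intro Bochner_Integration.integrable_add) auto
    show "(\<lambda>x. indicator {-1..1} x * f' x) \<in> borel_measurable lborel" using m by measurable
    show "AE x in lborel. norm (indicator {-1..1} x * f' x) \<le> norm (indicator {-1..1} x * 1 + indicator {-1..1} x * (f' x)\<^sup>2)"
    proof (rule AE_I2)
      fix x
      have "\<bar>f' x\<bar> \<le> 1 + (f' x)\<^sup>2" by (rule abs_le_1_sq)
      then show "norm (indicator {-1..1} x * f' x) \<le> norm (indicator {-1..1} x * 1 + indicator {-1..1} x * (f' x)\<^sup>2)"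
        by (auto simp: indicator_def)
    qed
  qed
  then have i1: "interval_lebesgue_integrable lborel (-1::real) (1::real) f'" using ii_ind[of "-1" 1 f'] by simp
  have fm1: "f (-1) = 0" using e by (auto simp: Em1)
  then show "f (-1) = 0" .
  show "ac (-1) 1 f f'"
  proof (rule acI)
    show "interval_lebesgue_integrable lborel (-1::real) (1::real) f'" by (rule i1)
    fix x :: real assume "x \<in> {-1..1}"
    then show "f x = f (-1) + (LBINT t=ereal (-1)..ereal x. f' t)" using e fm1 by (simp add: Em1)
  qed simp
qed

lemma ac_H10:
  assumes "ac (-1) 1 f f'" "f (-1) = 0" "f 1 = 0" "f' \<in> borel_measurable lborel"
    "interval_lebesgue_integrable lborel (-1::real) (1::real) (\<lambda>x. f' x ^ 2)"
  shows "H10 f f'"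
  unfolding H10_def
proof (intro conjI ballI)
  show "f' \<in> borel_measurable lborel" by fact
  show "set_integrable lborel {-1..1} (\<lambda>x. (f' x)\<^sup>2)" using assms(5) by (subst (asm) ii_Icc) auto
  show "f 1 = 0" by fact
  fix x :: real assume x: "x \<in> {-1..1}"
  show "f x = (LBINT t=-1..x. f' t)" using acD(3)[OF assms(1) x] assms(2) by (simp add: Em1)
qed

lemma posG:
  assumes "H10 f f'" "f 0 = 0"
  shows "interval_lebesgue_integrable lborel (-1::real) (1::real) (\<lambda>x. f' x ^ 2 + V x * f x ^ 2)"
    and "0 \<le> (LBINT x=(-1::real)..(1::real). f' x ^ 2 + V x * f x ^ 2)"
proof -
  note H = H10_ac[OF assms(1)]
  have acR: "ac 0 1 f f'" by (rule ac_sub[OF H(1)]) auto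
  have acL: "ac (-1) 0 f f'" by (rule ac_sub[OF H(1)]) auto
  have i2R: "interval_lebesgue_integrable lborel (0::real) (1::real) (\<lambda>x. f' x ^ 2)" by (rule ii_sub[OF _ _ _ H(4)]) auto
  have i2L: "interval_lebesgue_integrable lborel (-1::real) (0::real) (\<lambda>x. f' x ^ 2)" by (rule ii_sub[OF _ _ _ H(4)]) auto
  note R = posR[OF acR assms(2) H(3) i2R]
  note L = posL[OF acL H(2) assms(2) i2L]
  show ii: "interval_lebesgue_integrable lborel (-1::real) (1::real) (\<lambda>x. f' x ^ 2 + V x * f x ^ 2)"
    by (rule ii_join[OF _ _ L(1) R(1)]) auto
  have "(LBINT x=(-1::real)..(0::real). f' x ^ 2 + V x * f x ^ 2) + (LBINT x=(0::real)..(1::real). f' x ^ 2 + V x * f x ^ 2)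
      = (LBINT x=(-1::real)..(1::real). f' x ^ 2 + V x * f x ^ 2)"
    by (rule interval_integral_sum) (use ii in \<open>simp add: min_def max_def\<close>)
  then show "0 \<le> (LBINT x=(-1::real)..(1::real). f' x ^ 2 + V x * f x ^ 2)" using L(2) R(2) by linarith
qed

end

lemma ac_dcong: "ac a b F f \<Longrightarrow> (\<And>x. f x = g x) \<Longrightarrow> ac a b F g"
proof -
  assume "ac a b F f" "\<And>x. f x = g x"
  moreover have "f = g" using \<open>\<And>x. f x = g x\<close> by (rule ext)
  ultimately show "ac a b F g" by simp
qed

lemma lam_zero:
  fixes lam X :: real
  assumes "lam < 0" "0 \<le> X" "0 \<le> lam * X"
  shows "X = 0"
proof (rule ccontr)
  assume "X \<noteq> 0"
  then have "0 < X" using assms by simp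
  then have "lam * X < 0" using assms(1) by (simp add: mult_neg_pos)
  then show False using assms(3) by simp
qed

context Uctx begin

lemma nondegR:
  fixes B pB :: "real \<Rightarrow> real" and lam :: real
  assumes lam: "lam < 0" and B: "ac 0 1 B pB" and pB: "ac 0 1 pB (\<lambda>x. (Vt x - lam) * B x)"
    and B0: "B 0 = 0" and p0: "pB 0 = 1"
  shows "B 1 \<noteq> 0"
proof
  assume B1: "B 1 = 0"
  note I = ac_ibp[OF pB B]
  have cB: "continuous_on {0..1} B" by (rule ac_cont[OF B])
  have cpB: "continuous_on {0..1} pB" by (rule ac_cont[OF pB])
  have i2: "interval_lebesgue_integrable lborel (0::real) (1::real) (\<lambda>x. pB x ^ 2)"
    by (rule interval_integrable_continuous_on) (auto intro!: continuous_intros cpB)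
  have iB2: "interval_lebesgue_integrable lborel (0::real) (1::real) (\<lambda>x. B x ^ 2)"
    by (rule interval_integrable_continuous_on) (auto intro!: continuous_intros cB)
  note P = posR[OF B B0 B1 i2]
  have iB2': "interval_lebesgue_integrable lborel (0::real) (1::real) (\<lambda>x. lam * B x ^ 2)" using iB2 by simp
  have "0 = (LBINT x=(0::real)..(1::real). (Vt x - lam) * B x * B x + pB x * pB x)"
    using I(2) B0 B1 by simp
  also have "\<dots> = (LBINT x=(0::real)..(1::real). (pB x ^ 2 + V x * B x ^ 2) - lam * B x ^ 2)"
    by (rule LBINT_cong) (auto simp: Vt_def power2_eq_square algebra_simps)
  also have "\<dots> = (LBINT x=(0::real)..(1::real). pB x ^ 2 + V x * B x ^ 2) - lam * (LBINT x=(0::real)..(1::real). B x ^ 2)"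
    using interval_lebesgue_integral_diff(2)[OF P(1) iB2'] by simp
  finally have "0 \<le> lam * (LBINT x=(0::real)..(1::real). B x ^ 2)" using P(2) by linarith
  moreover have "0 \<le> (LBINT x=(0::real)..(1::real). B x ^ 2)" by (rule ii_nonneg) auto
  ultimately have "(LBINT x=(0::real)..(1::real). B x ^ 2) = 0" using lam_zero[OF lam] by blast
  then have Bz: "B x = 0" if "x \<in> {0..1}" for x using sq_zero[OF _ cB, of x] that by simp
  have pz: "pB x = 1" if x: "x \<in> {0..1}" for x
  proof -
    have "pB x = pB 0 + (LBINT t=(0::real)..x. (Vt t - lam) * B t)" using acD(3)[OF pB x] by simp
    also have "(LBINT t=(0::real)..x. (Vt t - lam) * B t) = (LBINT t=(0::real)..x. 0)"
      by (rule LBINT_cong) (use x Bz in auto)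
    finally show ?thesis using p0 by simp
  qed
  have "B 1 = B 0 + (LBINT t=(0::real)..(1::real). pB t)" using acD(3)[OF B, of 1] by simp
  also have "(LBINT t=(0::real)..(1::real). pB t) = (LBINT t=(0::real)..(1::real). 1)"
    by (rule LBINT_cong) (use pz in auto)
  finally have "B 1 = 1" using B0 by simp
  then show False using B1 by simp
qed

lemma nondegL:
  fixes B pB :: "real \<Rightarrow> real" and lam :: real
  assumes lam: "lam < 0" and B: "ac (-1) 0 B pB" and pB: "ac (-1) 0 pB (\<lambda>x. (Vt x - lam) * B x)"
    and B0: "B (-1) = 0" and p0: "pB (-1) = 1"
  shows "B 0 \<noteq> 0"
proof
  assume B1: "B 0 = 0"
  note I = ac_ibp[OF pB B]
  have cB: "continuous_on {-1..0} B" by (rule ac_cont[OF B])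
  have cpB: "continuous_on {-1..0} pB" by (rule ac_cont[OF pB])
  have i2: "interval_lebesgue_integrable lborel (-1::real) (0::real) (\<lambda>x. pB x ^ 2)"
    by (rule interval_integrable_continuous_on) (auto intro!: continuous_intros cpB)
  have iB2: "interval_lebesgue_integrable lborel (-1::real) (0::real) (\<lambda>x. B x ^ 2)"
    by (rule interval_integrable_continuous_on) (auto intro!: continuous_intros cB)
  note P = posL[OF B B0 B1 i2]
  have iB2': "interval_lebesgue_integrable lborel (-1::real) (0::real) (\<lambda>x. lam * B x ^ 2)" using iB2 by simp
  have "0 = (LBINT x=(-1::real)..(0::real). (Vt x - lam) * B x * B x + pB x * pB x)"
    using I(2) B0 B1 by simp
  also have "\<dots> = (LBINT x=(-1::real)..(0::real). (pB x ^ 2 + V x * B x ^ 2) - lam * B x ^ 2)"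
    by (rule LBINT_cong) (auto simp: Vt_def power2_eq_square algebra_simps)
  also have "\<dots> = (LBINT x=(-1::real)..(0::real). pB x ^ 2 + V x * B x ^ 2) - lam * (LBINT x=(-1::real)..(0::real). B x ^ 2)"
    using interval_lebesgue_integral_diff(2)[OF P(1) iB2'] by simp
  finally have "0 \<le> lam * (LBINT x=(-1::real)..(0::real). B x ^ 2)" using P(2) by linarith
  moreover have "0 \<le> (LBINT x=(-1::real)..(0::real). B x ^ 2)" by (rule ii_nonneg) auto
  ultimately have "(LBINT x=(-1::real)..(0::real). B x ^ 2) = 0" using lam_zero[OF lam] by blast
  then have Bz: "B x = 0" if "x \<in> {-1..0}" for x using sq_zero[OF _ cB, of x] that by simp
  have pz: "pB x = 1" if x: "x \<in> {-1..0}" for x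
  proof -
    have "pB x = pB (-1) + (LBINT t=(-1::real)..x. (Vt t - lam) * B t)" using acD(3)[OF pB x] by simp
    also have "(LBINT t=(-1::real)..x. (Vt t - lam) * B t) = (LBINT t=(-1::real)..x. 0)"
      by (rule LBINT_cong) (use x Bz in auto)
    finally show ?thesis using p0 by simp
  qed
  have "B 0 = B (-1) + (LBINT t=(-1::real)..(0::real). pB t)" using acD(3)[OF B, of 0] by simp
  also have "(LBINT t=(-1::real)..(0::real). pB t) = (LBINT t=(-1::real)..(0::real). 1)"
    by (rule LBINT_cong) (use pz in auto)
  finally have "B 0 = 1" using B0 by simp
  then show False using B1 by simp
qed

end

context Uctx begin

lemma q_meas: "(\<lambda>x. Vt x - lam) \<in> borel_measurable lborel"
  using Vt_meas by measurable

lemma q_bound: "\<bar>Vt x - lam\<bar> \<le> C + \<bar>lam\<bar>"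
  using Vt_bound[of x] by (simp add: abs_triangle_ineq4 order_trans[OF abs_triangle_ineq4])

lemma VU: "deriv (deriv U) y / U y = V y" by (simp add: V_def U2_def)

lemma sides:
  fixes lam :: real
  assumes lam: "lam < 0"
  obtains R pR L pL where
    "ac 0 1 R pR" "ac 0 1 pR (\<lambda>x. (Vt x - lam) * R x)" "R 0 = 1" "R 1 = 0"
    "ac (-1) 0 L pL" "ac (-1) 0 pL (\<lambda>x. (Vt x - lam) * L x)" "L 0 = 1" "L (-1) = 0"
proof -
  let ?q = "\<lambda>x. Vt x - lam"
  obtain A pA where A: "ac 0 1 A pA" "ac 0 1 pA (\<lambda>x. ?q x * A x)" "A 0 = 1" "pA 0 = 0"
    using ode_exists[of 0 1 ?q "C + \<bar>lam\<bar>" 1 0] q_meas q_bound by auto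
  obtain B pB where B: "ac 0 1 B pB" "ac 0 1 pB (\<lambda>x. ?q x * B x)" "B 0 = 0" "pB 0 = 1"
    using ode_exists[of 0 1 ?q "C + \<bar>lam\<bar>" 0 1] q_meas q_bound by auto
  have B1: "B 1 \<noteq> 0" by (rule nondegR[OF lam B])
  define k where "k = A 1 / B 1"
  have R1: "ac 0 1 (\<lambda>x. A x - k * B x) (\<lambda>x. pA x - k * pB x)" by (intro ac_diff ac_cmult A B)
  have R2: "ac 0 1 (\<lambda>x. pA x - k * pB x) (\<lambda>x. ?q x * (A x - k * B x))"
    by (rule ac_dcong[OF ac_diff[OF A(2) ac_cmult[OF B(2)]]]) (simp add: algebra_simps)
  obtain L0 pL0 where L: "ac (-1) 0 L0 pL0" "ac (-1) 0 pL0 (\<lambda>x. ?q x * L0 x)" "L0 (-1) = 0" "pL0 (-1) = 1"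
    using ode_exists[of "-1" 0 ?q "C + \<bar>lam\<bar>" 0 1] q_meas q_bound by auto
  have L00: "L0 0 \<noteq> 0" by (rule nondegL[OF lam L])
  define s where "s = 1 / L0 0"
  have L1: "ac (-1) 0 (\<lambda>x. s * L0 x) (\<lambda>x. s * pL0 x)" by (rule ac_cmult[OF L(1)])
  have L2: "ac (-1) 0 (\<lambda>x. s * pL0 x) (\<lambda>x. ?q x * (s * L0 x))"
    by (rule ac_dcong[OF ac_cmult[OF L(2)]]) (simp add: algebra_simps)
  show ?thesis
  proof (rule that[OF R1 R2 _ _ L1 L2])
    show "A 0 - k * B 0 = 1" using A B by simp
    show "A 1 - k * B 1 = 0" using B1 by (simp add: k_def)
    show "s * L0 0 = 1" using L00 by (simp add: s_def)
    show "s * L0 (-1) = 0" using L by simp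
  qed
qed


lemma exist_sol:
  fixes lam :: real
  assumes lam: "lam < 0"
  shows "\<exists>m \<Phi> \<Phi>'. weak_sol U m lam \<Phi> \<Phi>' \<and> \<Phi> 0 = 1"
proof -
  obtain R pR L pL where S:
    "ac 0 1 R pR" "ac 0 1 pR (\<lambda>x. (Vt x - lam) * R x)" "R 0 = 1" "R 1 = 0"
    "ac (-1) 0 L pL" "ac (-1) 0 pL (\<lambda>x. (Vt x - lam) * L x)" "L 0 = 1" "L (-1) = 0"
    using sides[OF lam] by blast
  define \<Phi> where "\<Phi> x = (if x \<le> 0 then L x else R x)" for x
  define \<Phi>' where "\<Phi>' x = indicator {-1..<0} x * pL x + indicator {0..1} x * pR x" for x
  have cL: "continuous_on {-1..0} L" by (rule ac_cont[OF S(5)])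
  have cpL: "continuous_on {-1..0} pL" by (rule ac_cont[OF S(6)])
  have cR: "continuous_on {0..1} R" by (rule ac_cont[OF S(1)])
  have cpR: "continuous_on {0..1} pR" by (rule ac_cont[OF S(2)])
  have \<Phi>'L: "\<Phi>' x = pL x" if "-1 < x" "x < 0" for x using that by (simp add: \<Phi>'_def indicator_def)
  have \<Phi>'R: "\<Phi>' x = pR x" if "0 < x" "x < 1" for x using that by (simp add: \<Phi>'_def indicator_def)
  have \<Phi>L: "\<Phi> x = L x" if "x \<le> 0" for x using that by (simp add: \<Phi>_def)
  have \<Phi>R: "\<Phi> x = R x" if "0 \<le> x" for x using that S(3,7) by (cases "x = 0") (auto simp: \<Phi>_def)
  have iL: "interval_lebesgue_integrable lborel (-1::real) (0::real) \<Phi>'"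
    by (rule ii_cong[OF _ _ acD(2)[OF S(5)]]) (use \<Phi>'L in auto)
  have iR: "interval_lebesgue_integrable lborel (0::real) (1::real) \<Phi>'"
    by (rule ii_cong[OF _ _ acD(2)[OF S(1)]]) (use \<Phi>'R in auto)
  have i\<Phi>': "interval_lebesgue_integrable lborel (-1::real) (1::real) \<Phi>'" by (rule ii_join[OF _ _ iL iR]) auto
  have ac\<Phi>: "ac (-1) 1 \<Phi> \<Phi>'"
  proof (rule acI)
    show "interval_lebesgue_integrable lborel (-1::real) (1::real) \<Phi>'" by (rule i\<Phi>')
    fix x :: real assume x: "x \<in> {-1..1}"
    show "\<Phi> x = \<Phi> (-1) + (LBINT t=ereal (-1)..ereal x. \<Phi>' t)"
    proof (cases "x \<le> 0")
      case True
      have "(LBINT t=ereal (-1)..ereal x. \<Phi>' t) = (LBINT t=ereal (-1)..ereal x. pL t)"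
        by (rule LBINT_cong) (use x True \<Phi>'L in auto)
      moreover have "L x = L (-1) + (LBINT t=ereal (-1)..ereal x. pL t)" using acD(3)[OF S(5), of x] x True by simp
      ultimately show ?thesis using True \<Phi>L[of x] \<Phi>L[of "-1"] by simp
    next
      case False
      have ix: "interval_lebesgue_integrable lborel (-1::real) x \<Phi>'" by (rule ii_sub[OF _ _ _ i\<Phi>']) (use x in auto)
      have "(LBINT t=ereal (-1)..ereal 0. \<Phi>' t) + (LBINT t=ereal 0..ereal x. \<Phi>' t) = (LBINT t=ereal (-1)..ereal x. \<Phi>' t)"
        by (rule interval_integral_sum) (use ix False in \<open>simp add: min_def max_def\<close>)
      moreover have "(LBINT t=ereal (-1)..ereal 0. \<Phi>' t) = (LBINT t=ereal (-1)..ereal 0. pL t)"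
        by (rule LBINT_cong) (use \<Phi>'L in auto)
      moreover have "(LBINT t=ereal 0..ereal x. \<Phi>' t) = (LBINT t=ereal 0..ereal x. pR t)"
        by (rule LBINT_cong) (use x False \<Phi>'R in auto)
      moreover have "L 0 = L (-1) + (LBINT t=ereal (-1)..ereal 0. pL t)" using acD(3)[OF S(5), of 0] by simp
      moreover have "R x = R 0 + (LBINT t=ereal 0..ereal x. pR t)" using acD(3)[OF S(1), of x] x False by simp
      ultimately show ?thesis using False S(3,7,8) \<Phi>R[of x] \<Phi>L[of "-1"] by simp
    qed
  qed simp
  have \<Phi>'m: "\<Phi>' \<in> borel_measurable lborel"
  proof -
    have m1: "(\<lambda>x. indicator {-1..<0} x * (indicator {-1..0} x * pL x)) \<in> borel_measurable lborel"
      by (intro borel_measurable_times borel_measurable_indicator cont_meas[OF cpL]) auto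
    have m2: "(\<lambda>x. indicator {0..1} x * (indicator {0..1} x * pR x)) \<in> borel_measurable lborel"
      by (intro borel_measurable_times borel_measurable_indicator cont_meas[OF cpR]) auto
    have "\<Phi>' = (\<lambda>x. indicator {-1..<0} x * (indicator {-1..0} x * pL x) + indicator {0..1} x * (indicator {0..1} x * pR x))"
      by (rule ext) (simp add: \<Phi>'_def indicator_def)
    then show ?thesis using m1 m2 by simp
  qed
  have i2: "interval_lebesgue_integrable lborel (-1::real) (1::real) (\<lambda>x. \<Phi>' x ^ 2)"
  proof (rule ii_join)
    show "interval_lebesgue_integrable lborel (-1::real) (0::real) (\<lambda>x. \<Phi>' x ^ 2)"
      by (rule ii_cong[OF _ _ interval_integrable_continuous_on[of "-1" 0 "\<lambda>x. pL x ^ 2"]])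
         (use \<Phi>'L cpL in \<open>auto intro!: continuous_intros\<close>)
    show "interval_lebesgue_integrable lborel (0::real) (1::real) (\<lambda>x. \<Phi>' x ^ 2)"
      by (rule ii_cong[OF _ _ interval_integrable_continuous_on[of 0 1 "\<lambda>x. pR x ^ 2"]])
         (use \<Phi>'R cpR in \<open>auto intro!: continuous_intros\<close>)
  qed auto
  have H: "H10 \<Phi> \<Phi>'"
    by (rule ac_H10[OF ac\<Phi> _ _ \<Phi>'m i2]) (use S \<Phi>L[of "-1"] \<Phi>R[of 1] in auto)
  define m where "m = U1 0 * (pL 0 - pR 0)"
  have U10: "U1 0 > 0" using U1_pos[of 0] c0 by auto
  show ?thesis
  proof (intro exI conjI)
    show "\<Phi> 0 = 1" using S by (simp add: \<Phi>_def)
    show "weak_sol U m lam \<Phi> \<Phi>'" unfolding weak_sol_def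
    proof (intro conjI allI impI)
      show "H10 \<Phi> \<Phi>'" by (rule H)
      fix \<phi> \<phi>' assume H\<phi>: "H10 \<phi> \<phi>'"
      note P = H10_ac[OF H\<phi>]
      have \<phi>R: "ac 0 1 \<phi> \<phi>'" by (rule ac_sub[OF P(1)]) auto
      have \<phi>L: "ac (-1) 0 \<phi> \<phi>'" by (rule ac_sub[OF P(1)]) auto
      note IR = ac_ibp[OF S(2) \<phi>R]
      note IL = ac_ibp[OF S(6) \<phi>L]
      define I where "I y = \<Phi>' y * \<phi>' y + deriv (deriv U) y / U y * \<Phi> y * \<phi> y - lam * \<Phi> y * \<phi> y" for y
      have eqR: "(Vt y - lam) * R y * \<phi> y + pR y * \<phi>' y = I y" if "0 < y" "y < 1" for y
        using that \<Phi>'R[OF that] \<Phi>R[of y] by (simp add: I_def VU Vt_def algebra_simps)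
      have eqL: "(Vt y - lam) * L y * \<phi> y + pL y * \<phi>' y = I y" if "-1 < y" "y < 0" for y
        using that \<Phi>'L[OF that] \<Phi>L[of y] by (simp add: I_def VU Vt_def algebra_simps)
      have iIR: "interval_lebesgue_integrable lborel (0::real) (1::real) I"
        by (rule ii_cong[OF _ _ IR(1)]) (use eqR in auto)
      have iIL: "interval_lebesgue_integrable lborel (-1::real) (0::real) I"
        by (rule ii_cong[OF _ _ IL(1)]) (use eqL in auto)
      have iI: "interval_lebesgue_integrable lborel (-1::real) (1::real) I" by (rule ii_join[OF _ _ iIL iIR]) auto
      have JR: "(LBINT y=(0::real)..(1::real). I y) = - pR 0 * \<phi> 0"
      proof -
        have "(LBINT y=(0::real)..(1::real). I y) = (LBINT y=(0::real)..(1::real). (Vt y - lam) * R y * \<phi> y + pR y * \<phi>' y)"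
          by (rule LBINT_cong) (use eqR in auto)
        also have "\<dots> = pR 1 * \<phi> 1 - pR 0 * \<phi> 0" by (rule IR(2))
        finally show ?thesis using P(3) by simp
      qed
      have JL: "(LBINT y=(-1::real)..(0::real). I y) = pL 0 * \<phi> 0"
      proof -
        have "(LBINT y=(-1::real)..(0::real). I y) = (LBINT y=(-1::real)..(0::real). (Vt y - lam) * L y * \<phi> y + pL y * \<phi>' y)"
          by (rule LBINT_cong) (use eqL in auto)
        also have "\<dots> = pL 0 * \<phi> 0 - pL (-1) * \<phi> (-1)" by (rule IL(2))
        finally show ?thesis using P(2) by simp
      qed
      have "(LBINT y=(-1::real)..(0::real). I y) + (LBINT y=(0::real)..(1::real). I y) = (LBINT y=(-1::real)..(1::real). I y)"
        by (rule interval_integral_sum) (use iI in \<open>simp add: min_def max_def\<close>)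
      then have tot: "(LBINT y=(-1::real)..(1::real). I y) = (pL 0 - pR 0) * \<phi> 0" using JR JL by (simp add: algebra_simps)
      have "(LBINT y=-1..1. I y) = (LBINT y=(-1::real)..(1::real). I y)" by (simp add: Em1 one_ereal_def)
      also have "\<dots> = m * \<Phi> 0 * \<phi> 0 / deriv U 0"
        using tot U10 S(7) by (simp add: m_def \<Phi>_def U1_def)
      finally show "(LBINT y=-1..1. \<Phi>' y * \<phi>' y + deriv (deriv U) y / U y * \<Phi> y * \<phi> y - lam * \<Phi> y * \<phi> y) = m * \<Phi> 0 * \<phi> 0 / deriv U 0"
        unfolding I_def .
    qed
  qed
qed

end

lemma LB1: "(LBINT y=-1..1. f y) = (LBINT y=(-1::real)..(1::real). f y)"
  by (simp add: Em1 one_ereal_def)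

context Uctx begin

lemma H10_cont: "H10 f f' \<Longrightarrow> continuous_on {-1..1} f"
  using H10_ac(1) ac_cont by blast

lemma prod_ii:
  assumes F: "H10 f f'" and G: "H10 g g'"
  shows "interval_lebesgue_integrable lborel (-1::real) (1::real) (\<lambda>y. f' y * g' y)"
    and "interval_lebesgue_integrable lborel (-1::real) (1::real) (\<lambda>y. V y * f y * g y)"
    and "interval_lebesgue_integrable lborel (-1::real) (1::real) (\<lambda>y. f y * g y)"
proof -
  note HF = H10_ac[OF F] and HG = H10_ac[OF G]
  have cf: "continuous_on {-1..1} f" and cg: "continuous_on {-1..1} g" using H10_cont F G by auto
  have "integrable lborel (\<lambda>x. indicator {-1..1} x * (f' x * g' x))"
  proof (rule Bochner_Integration.integrable_bound)
    have "interval_lebesgue_integrable lborel (-1::real) (1::real) (\<lambda>x. f' x ^ 2 + g' x ^ 2)"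
      using HF(4) HG(4) by (rule interval_lebesgue_integral_add(1))
    then show "integrable lborel (\<lambda>x. indicator {-1..1} x * (f' x ^ 2 + g' x ^ 2))"
      using ii_ind[of "-1" 1] by simp
    show "(\<lambda>x. indicator {-1..1} x * (f' x * g' x)) \<in> borel_measurable lborel"
      using HF(5) HG(5) by measurable
    show "AE x in lborel. norm (indicator {-1..1} x * (f' x * g' x)) \<le> norm (indicator {-1..1} x * (f' x ^ 2 + g' x ^ 2))"
    proof (rule AE_I2)
      fix x
      have "\<bar>f' x * g' x\<bar> \<le> f' x ^ 2 + g' x ^ 2"
      proof -
        have "0 \<le> (\<bar>f' x\<bar> - \<bar>g' x\<bar>)\<^sup>2" by simp
        then have "2 * (\<bar>f' x\<bar> * \<bar>g' x\<bar>) \<le> f' x ^ 2 + g' x ^ 2"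
          by (simp add: power2_eq_square algebra_simps abs_mult_self_eq)
        moreover have "0 \<le> \<bar>f' x\<bar> * \<bar>g' x\<bar>" by simp
        ultimately show ?thesis unfolding abs_mult by linarith
      qed
      then show "norm (indicator {-1..1} x * (f' x * g' x)) \<le> norm (indicator {-1..1} x * (f' x ^ 2 + g' x ^ 2))"
        by (auto simp: indicator_def)
    qed
  qed
  then show "interval_lebesgue_integrable lborel (-1::real) (1::real) (\<lambda>y. f' y * g' y)"
    using ii_ind[of "-1" 1] by simp
  have "interval_lebesgue_integrable lborel (-1::real) (1::real) (\<lambda>y. V y * (f y * g y))"
    by (rule V_ii) (use cf cg in \<open>auto intro!: continuous_intros\<close>)
  then show "interval_lebesgue_integrable lborel (-1::real) (1::real) (\<lambda>y. V y * f y * g y)"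
    by (simp add: mult.assoc)
  show "interval_lebesgue_integrable lborel (-1::real) (1::real) (\<lambda>y. f y * g y)"
    by (rule interval_integrable_continuous_on) (use cf cg in \<open>auto intro!: continuous_intros\<close>)
qed

lemma W_split:
  assumes F: "H10 f f'" and G: "H10 g g'"
  shows "(LBINT y=-1..1. f' y * g' y + deriv (deriv U) y / U y * f y * g y - lam * f y * g y)
       = (LBINT y=(-1::real)..(1::real). f' y * g' y) + (LBINT y=(-1::real)..(1::real). V y * f y * g y)
         - lam * (LBINT y=(-1::real)..(1::real). f y * g y)"
proof -
  note I = prod_ii[OF F G]
  have I3: "interval_lebesgue_integrable lborel (-1::real) (1::real) (\<lambda>y. lam * (f y * g y))" using I(3) by simp
  have "(LBINT y=-1..1. f' y * g' y + deriv (deriv U) y / U y * f y * g y - lam * f y * g y)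
      = (LBINT y=(-1::real)..(1::real). (f' y * g' y + V y * f y * g y) - lam * (f y * g y))"
    unfolding LB1 VU by (simp add: mult.assoc)
  also have "\<dots> = (LBINT y=(-1::real)..(1::real). f' y * g' y + V y * f y * g y) - (LBINT y=(-1::real)..(1::real). lam * (f y * g y))"
    by (rule interval_lebesgue_integral_diff(2)[OF interval_lebesgue_integral_add(1)[OF I(1,2)] I3])
  also have "(LBINT y=(-1::real)..(1::real). f' y * g' y + V y * f y * g y) = (LBINT y=(-1::real)..(1::real). f' y * g' y) + (LBINT y=(-1::real)..(1::real). V y * f y * g y)"
    by (rule interval_lebesgue_integral_add(2)[OF I(1,2)])
  finally show ?thesis by simp
qed

lemma H10_diff:
  assumes F: "H10 f f'" and G: "H10 g g'"
  shows "H10 (\<lambda>x. f x - g x) (\<lambda>x. f' x - g' x)"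
proof -
  note HF = H10_ac[OF F] and HG = H10_ac[OF G]
  note P = prod_ii[OF F G]
  have i: "interval_lebesgue_integrable lborel (-1::real) (1::real) (\<lambda>x. (f' x ^ 2 + g' x ^ 2) - 2 * (f' x * g' x))"
    using HF(4) HG(4) P(1) by (intro interval_lebesgue_integral_diff(1) interval_lebesgue_integral_add(1)) auto
  show ?thesis
  proof (rule ac_H10)
    show "ac (-1) 1 (\<lambda>x. f x - g x) (\<lambda>x. f' x - g' x)" by (rule ac_diff[OF HF(1) HG(1)])
    show "f (-1) - g (-1) = 0" "f 1 - g 1 = 0" using HF HG by auto
    show "(\<lambda>x. f' x - g' x) \<in> borel_measurable lborel" using HF(5) HG(5) by measurable
    show "interval_lebesgue_integrable lborel (-1::real) (1::real) (\<lambda>x. (f' x - g' x) ^ 2)"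
      using i by (simp add: power2_eq_square algebra_simps)
  qed
qed

lemma sq_pos:
  assumes F: "H10 f f'" and "f 0 = 1"
  shows "0 < (LBINT y=(-1::real)..(1::real). f y * f y)"
proof -
  have cf: "continuous_on {-1..1} f" using H10_cont F by auto
  have "0 \<le> (LBINT y=(-1::real)..(1::real). f y ^ 2)" by (rule ii_nonneg) auto
  moreover have "(LBINT y=(-1::real)..(1::real). f y ^ 2) \<noteq> 0"
  proof
    assume "(LBINT y=(-1::real)..(1::real). f y ^ 2) = 0"
    from sq_zero[OF _ cf this, of 0] assms(2) show False by simp
  qed
  ultimately show ?thesis by (simp add: power2_eq_square)
qed

lemma uniq:
  assumes lam: "lam < 0" and Psi: "weak_sol U m lam \<Psi> \<Psi>'" and Phi: "weak_sol U M lam \<Phi> \<Phi>'"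
    and P1: "\<Phi> 0 = 1" and nt: "\<exists>x\<in>{-1..1}. \<Psi> x \<noteq> 0"
  shows "m = M"
proof -
  have HPsi: "H10 \<Psi> \<Psi>'" and wPsi: "\<And>\<phi> \<phi>'. H10 \<phi> \<phi>' \<Longrightarrow>
     (LBINT y=-1..1. \<Psi>' y * \<phi>' y + deriv (deriv U) y / U y * \<Psi> y * \<phi> y - lam * \<Psi> y * \<phi> y) = m * \<Psi> 0 * \<phi> 0 / deriv U 0"
    using Psi unfolding weak_sol_def by auto
  have HPhi: "H10 \<Phi> \<Phi>'" and wPhi: "\<And>\<phi> \<phi>'. H10 \<phi> \<phi>' \<Longrightarrow>
     (LBINT y=-1..1. \<Phi>' y * \<phi>' y + deriv (deriv U) y / U y * \<Phi> y * \<phi> y - lam * \<Phi> y * \<phi> y) = M * \<Phi> 0 * \<phi> 0 / deriv U 0"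
    using Phi unfolding weak_sol_def by auto
  have U10: "deriv U 0 > 0" using U1_pos[of 0] c0 by (auto simp: U1_def)
  have P0: "\<Psi> 0 \<noteq> 0"
  proof
    assume z: "\<Psi> 0 = 0"
    have e: "(LBINT y=(-1::real)..(1::real). \<Psi>' y * \<Psi>' y) + (LBINT y=(-1::real)..(1::real). V y * \<Psi> y * \<Psi> y)
         - lam * (LBINT y=(-1::real)..(1::real). \<Psi> y * \<Psi> y) = 0"
      using wPsi[OF HPsi] W_split[OF HPsi HPsi, of lam] z by simp
    note G = posG[OF HPsi z]
    note I = prod_ii[OF HPsi HPsi]
    have "(LBINT y=(-1::real)..(1::real). \<Psi>' y ^ 2 + V y * \<Psi> y ^ 2)
        = (LBINT y=(-1::real)..(1::real). \<Psi>' y * \<Psi>' y) + (LBINT y=(-1::real)..(1::real). V y * \<Psi> y * \<Psi> y)"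
      using interval_lebesgue_integral_add(2)[OF I(1) I(2)] by (simp add: power2_eq_square mult.assoc)
    then have "0 \<le> lam * (LBINT y=(-1::real)..(1::real). \<Psi> y * \<Psi> y)" using e G(2) by linarith
    moreover have "0 \<le> (LBINT y=(-1::real)..(1::real). \<Psi> y * \<Psi> y)" by (rule ii_nonneg) auto
    ultimately have "(LBINT y=(-1::real)..(1::real). \<Psi> y * \<Psi> y) = 0" using lam_zero[OF lam] by blast
    then have "(LBINT y=(-1::real)..(1::real). \<Psi> y ^ 2) = 0" by (simp add: power2_eq_square)
    then have "\<Psi> x = 0" if "x \<in> {-1..1}" for x using sq_zero[OF _ H10_cont[OF HPsi], of x] that by simp
    then show False using nt by auto
  qed
  have "(LBINT y=-1..1. \<Psi>' y * \<Phi>' y + deriv (deriv U) y / U y * \<Psi> y * \<Phi> y - lam * \<Psi> y * \<Phi> y)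
      = (LBINT y=-1..1. \<Phi>' y * \<Psi>' y + deriv (deriv U) y / U y * \<Phi> y * \<Psi> y - lam * \<Phi> y * \<Psi> y)"
    by (simp add: algebra_simps)
  then have "m * \<Psi> 0 * \<Phi> 0 / deriv U 0 = M * \<Phi> 0 * \<Psi> 0 / deriv U 0"
    using wPsi[OF HPhi] wPhi[OF HPsi] by simp
  then show ?thesis using P0 P1 U10 by simp
qed

end

lemma num_est:
  fixes l t X N P :: real
  assumes l: "0 < l" and t: "0 \<le> t" "t \<le> l / 2" and X: "0 \<le> X" and N: "0 \<le> N"
    and h1: "l * X \<le> t * (\<bar>P\<bar> + X)" and h2: "P\<^sup>2 \<le> N * X"
  shows "\<bar>P\<bar> \<le> 2 * t * N / l"
proof (cases "P = 0")
  case True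
  then show ?thesis using t N l by simp
next
  case False
  have "(l - t) * X \<le> t * \<bar>P\<bar>" using h1 by (simp add: algebra_simps)
  moreover have "(l / 2) * X \<le> (l - t) * X" using t X by (intro mult_right_mono) auto
  ultimately have "(l / 2) * X \<le> t * \<bar>P\<bar>" by linarith
  then have Xb: "X \<le> 2 * t * \<bar>P\<bar> / l" using l by (simp add: field_simps)
  have "\<bar>P\<bar> * \<bar>P\<bar> \<le> N * X" using h2 by (simp add: power2_eq_square abs_mult_self_eq)
  also have "\<dots> \<le> N * (2 * t * \<bar>P\<bar> / l)" using Xb N by (intro mult_left_mono) auto
  finally have "\<bar>P\<bar> * \<bar>P\<bar> \<le> (2 * t * N / l) * \<bar>P\<bar>" by (simp add: field_simps)
  moreover have "0 < \<bar>P\<bar>" using False by simp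
  ultimately show ?thesis by (rule mult_right_le_imp_le)
qed

context Uctx begin

lemma wsD:
  assumes "weak_sol U m lam \<Phi> \<Phi>'"
  shows "H10 \<Phi> \<Phi>'" "\<And>\<phi> \<phi>'. H10 \<phi> \<phi>' \<Longrightarrow>
     (LBINT y=-1..1. \<Phi>' y * \<phi>' y + deriv (deriv U) y / U y * \<Phi> y * \<phi> y - lam * \<Phi> y * \<phi> y) = m * \<Phi> 0 * \<phi> 0 / deriv U 0"
  using assms unfolding weak_sol_def by auto

lemma green:
  assumes Wl: "weak_sol U ml l \<Phi>l \<Phi>l'" "\<Phi>l 0 = 1" and Wm: "weak_sol U mm \<mu> \<Phi>m \<Phi>m'" "\<Phi>m 0 = 1"
  shows "(ml - mm) / deriv U 0 = (\<mu> - l) * (LBINT y=(-1::real)..(1::real). \<Phi>l y * \<Phi>m y)"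
proof -
  note L = wsD[OF Wl(1)] and M = wsD[OF Wm(1)]
  have e1: "(LBINT y=(-1::real)..(1::real). \<Phi>l' y * \<Phi>m' y) + (LBINT y=(-1::real)..(1::real). V y * \<Phi>l y * \<Phi>m y)
         - l * (LBINT y=(-1::real)..(1::real). \<Phi>l y * \<Phi>m y) = ml / deriv U 0"
    using L(2)[OF M(1)] W_split[OF L(1) M(1), of l] Wl(2) Wm(2) by simp
  have e2: "(LBINT y=(-1::real)..(1::real). \<Phi>m' y * \<Phi>l' y) + (LBINT y=(-1::real)..(1::real). V y * \<Phi>m y * \<Phi>l y)
         - \<mu> * (LBINT y=(-1::real)..(1::real). \<Phi>m y * \<Phi>l y) = mm / deriv U 0"
    using M(2)[OF L(1)] W_split[OF M(1) L(1), of \<mu>] Wl(2) Wm(2) by simp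
  have c1: "(LBINT y=(-1::real)..(1::real). \<Phi>m' y * \<Phi>l' y) = (LBINT y=(-1::real)..(1::real). \<Phi>l' y * \<Phi>m' y)"
    by (simp add: mult.commute)
  have c2: "(LBINT y=(-1::real)..(1::real). V y * \<Phi>m y * \<Phi>l y) = (LBINT y=(-1::real)..(1::real). V y * \<Phi>l y * \<Phi>m y)"
    by (simp add: mult_ac)
  have c3: "(LBINT y=(-1::real)..(1::real). \<Phi>m y * \<Phi>l y) = (LBINT y=(-1::real)..(1::real). \<Phi>l y * \<Phi>m y)"
    by (simp add: mult.commute)
  have "ml / deriv U 0 - mm / deriv U 0 = (\<mu> - l) * (LBINT y=(-1::real)..(1::real). \<Phi>l y * \<Phi>m y)"
    using e1 e2 unfolding c1 c2 c3 by (simp add: algebra_simps)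
  then show ?thesis by (simp add: diff_divide_distrib)
qed

lemma cont_est:
  assumes l: "l < 0" and Wl: "weak_sol U ml l \<Phi>l \<Phi>l'" "\<Phi>l 0 = 1" and Wm: "weak_sol U mm \<mu> \<Phi>m \<Phi>m'" "\<Phi>m 0 = 1"
  shows "- l * (LBINT y=(-1::real)..(1::real). (\<Phi>m y - \<Phi>l y) * (\<Phi>m y - \<Phi>l y))
      \<le> (\<mu> - l) * ((LBINT y=(-1::real)..(1::real). \<Phi>l y * (\<Phi>m y - \<Phi>l y)) + (LBINT y=(-1::real)..(1::real). (\<Phi>m y - \<Phi>l y) * (\<Phi>m y - \<Phi>l y)))"
proof -
  note L = wsD[OF Wl(1)] and M = wsD[OF Wm(1)]
  define D where "D x = \<Phi>m x - \<Phi>l x" for x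
  define D' where "D' x = \<Phi>m' x - \<Phi>l' x" for x
  have HD: "H10 D D'" unfolding D_def D'_def by (rule H10_diff[OF M(1) L(1)])
  have D0: "D 0 = 0" using Wl Wm by (simp add: D_def)
  let ?I = "\<lambda>f. (LBINT y=(-1::real)..(1::real). f y)"
  have el: "?I (\<lambda>y. \<Phi>l' y * D' y) + ?I (\<lambda>y. V y * \<Phi>l y * D y) - l * ?I (\<lambda>y. \<Phi>l y * D y) = 0"
    using L(2)[OF HD] W_split[OF L(1) HD, of l] D0 by simp
  have em: "?I (\<lambda>y. \<Phi>m' y * D' y) + ?I (\<lambda>y. V y * \<Phi>m y * D y) - \<mu> * ?I (\<lambda>y. \<Phi>m y * D y) = 0"
    using M(2)[OF HD] W_split[OF M(1) HD, of \<mu>] D0 by simp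
  note Il = prod_ii[OF L(1) HD] and Im = prod_ii[OF M(1) HD] and ID = prod_ii[OF HD HD]
  have d1: "?I (\<lambda>y. \<Phi>m' y * D' y) - ?I (\<lambda>y. \<Phi>l' y * D' y) = ?I (\<lambda>y. D' y * D' y)"
    unfolding interval_lebesgue_integral_diff(2)[OF Im(1) Il(1), symmetric] by (simp add: D'_def algebra_simps)
  have d2: "?I (\<lambda>y. V y * \<Phi>m y * D y) - ?I (\<lambda>y. V y * \<Phi>l y * D y) = ?I (\<lambda>y. V y * D y * D y)"
    unfolding interval_lebesgue_integral_diff(2)[OF Im(2) Il(2), symmetric] by (simp add: D_def algebra_simps)
  have d3: "?I (\<lambda>y. \<Phi>m y * D y) - ?I (\<lambda>y. \<Phi>l y * D y) = ?I (\<lambda>y. D y * D y)"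
    unfolding interval_lebesgue_integral_diff(2)[OF Im(3) Il(3), symmetric] by (simp add: D_def algebra_simps)
  note G = posG[OF HD D0]
  have "?I (\<lambda>y. D' y ^ 2 + V y * D y ^ 2) = ?I (\<lambda>y. D' y * D' y) + ?I (\<lambda>y. V y * D y * D y)"
    using interval_lebesgue_integral_add(2)[OF ID(1) ID(2)] by (simp add: power2_eq_square mult.assoc)
  then have pos: "0 \<le> ?I (\<lambda>y. D' y * D' y) + ?I (\<lambda>y. V y * D y * D y)" using G(2) by simp
  have "?I (\<lambda>y. D' y * D' y) + ?I (\<lambda>y. V y * D y * D y) = \<mu> * ?I (\<lambda>y. \<Phi>m y * D y) - l * ?I (\<lambda>y. \<Phi>l y * D y)"
    using el em d1 d2 by linarith
  also have "\<dots> = (\<mu> - l) * ?I (\<lambda>y. \<Phi>l y * D y) + \<mu> * ?I (\<lambda>y. D y * D y)"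
    using d3 by (simp add: algebra_simps)
  finally have "0 \<le> (\<mu> - l) * ?I (\<lambda>y. \<Phi>l y * D y) + \<mu> * ?I (\<lambda>y. D y * D y)" using pos by simp
  then show ?thesis unfolding D_def[symmetric] by (simp add: algebra_simps)
qed

end

context Uctx begin

lemma Mderiv:
  fixes M :: "real \<Rightarrow> real" and l :: real
  assumes Mex: "\<And>\<mu>. \<mu> < 0 \<Longrightarrow> \<exists>\<Phi> \<Phi>'. weak_sol U (M \<mu>) \<mu> \<Phi> \<Phi>' \<and> \<Phi> 0 = 1" and l: "l < 0"
  shows "\<exists>d. (M has_real_derivative d) (at l) \<and> d < 0"
proof -
  obtain \<Phi>l \<Phi>l' where Wl: "weak_sol U (M l) l \<Phi>l \<Phi>l'" "\<Phi>l 0 = 1" using Mex[OF l] by blast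
  note Hl = wsD(1)[OF Wl(1)]
  let ?I = "\<lambda>f. (LBINT y=(-1::real)..(1::real). f y)"
  define N where "N = ?I (\<lambda>y. \<Phi>l y * \<Phi>l y)"
  have Npos: "0 < N" using sq_pos[OF Hl Wl(2)] unfolding N_def .
  define u where "u = deriv U 0"
  have u: "0 < u" using U1_pos[of 0] c0 by (auto simp: U1_def u_def)
  define d where "d = - u * N"
  have d: "d < 0" using u Npos by (simp add: d_def)
  define L where "L = - l"
  have L: "0 < L" using l by (simp add: L_def)
  have key: "\<bar>(M \<mu> - M l) / (\<mu> - l) - d\<bar> \<le> u * (2 * \<bar>\<mu> - l\<bar> * N / L)"
    if \<mu>: "\<mu> \<noteq> l" "\<bar>\<mu> - l\<bar> < L / 2" for \<mu>
  proof -
    have \<mu>0: "\<mu> < 0" using \<mu> l by (auto simp: L_def)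
    obtain \<Phi>m \<Phi>m' where Wm: "weak_sol U (M \<mu>) \<mu> \<Phi>m \<Phi>m'" "\<Phi>m 0 = 1" using Mex[OF \<mu>0] by blast
    note Hm = wsD(1)[OF Wm(1)]
    have HD: "H10 (\<lambda>x. \<Phi>m x - \<Phi>l x) (\<lambda>x. \<Phi>m' x - \<Phi>l' x)" by (rule H10_diff[OF Hm Hl])
    have g: "(M l - M \<mu>) / u = (\<mu> - l) * ?I (\<lambda>y. \<Phi>l y * \<Phi>m y)" using green[OF Wl Wm] unfolding u_def .
    define P where "P = ?I (\<lambda>y. \<Phi>l y * (\<Phi>m y - \<Phi>l y))"
    define X where "X = ?I (\<lambda>y. (\<Phi>m y - \<Phi>l y) * (\<Phi>m y - \<Phi>l y))"
    have ce: "- l * X \<le> (\<mu> - l) * (P + X)" using cont_est[OF l Wl Wm] unfolding P_def X_def .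
    note I1 = prod_ii[OF Hl Hl] and I2 = prod_ii[OF Hl HD] and I3 = prod_ii[OF HD HD]
    have sp: "?I (\<lambda>y. \<Phi>l y * \<Phi>m y) = N + P"
    proof -
      have "?I (\<lambda>y. \<Phi>l y * \<Phi>m y) = ?I (\<lambda>y. \<Phi>l y * \<Phi>l y + \<Phi>l y * (\<Phi>m y - \<Phi>l y))"
        by (simp add: algebra_simps)
      also have "\<dots> = N + P" unfolding N_def P_def by (rule interval_lebesgue_integral_add(2)[OF I1(3) I2(3)])
      finally show ?thesis .
    qed
    have cs: "P\<^sup>2 \<le> N * X"
    proof -
      have "(?I (\<lambda>y. \<Phi>l y * (\<Phi>m y - \<Phi>l y)))\<^sup>2 \<le> ?I (\<lambda>y. \<Phi>l y ^ 2) * ?I (\<lambda>y. (\<Phi>m y - \<Phi>l y) ^ 2)"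
        by (rule CS_ii) (use I1(3) I3(3) I2(3) in \<open>auto simp: power2_eq_square\<close>)
      then show ?thesis unfolding P_def N_def X_def by (simp add: power2_eq_square)
    qed
    have X0: "0 \<le> X" unfolding X_def by (rule ii_nonneg) auto
    have N0: "0 \<le> N" using Npos by simp
    have h1: "L * X \<le> \<bar>\<mu> - l\<bar> * (\<bar>P\<bar> + X)"
    proof -
      have "(\<mu> - l) * (P + X) \<le> \<bar>(\<mu> - l) * (P + X)\<bar>" by simp
      also have "\<dots> = \<bar>\<mu> - l\<bar> * \<bar>P + X\<bar>" by (simp add: abs_mult)
      also have "\<dots> \<le> \<bar>\<mu> - l\<bar> * (\<bar>P\<bar> + X)" using X0 by (intro mult_left_mono) auto
      finally show ?thesis using ce by (simp add: L_def)
    qed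
    have Pb: "\<bar>P\<bar> \<le> 2 * \<bar>\<mu> - l\<bar> * N / L"
      by (rule num_est[OF L _ _ X0 N0 h1 cs]) (use \<mu> in auto)
    have q: "(M \<mu> - M l) / (\<mu> - l) = - u * (N + P)"
    proof -
      have "M l - M \<mu> = u * ((\<mu> - l) * (N + P))" using g sp u by (simp add: field_simps)
      then show ?thesis using \<mu>(1) by (simp add: field_simps)
    qed
    have "\<bar>(M \<mu> - M l) / (\<mu> - l) - d\<bar> = u * \<bar>P\<bar>" unfolding q d_def using u by (simp add: algebra_simps abs_mult)
    also have "\<dots> \<le> u * (2 * \<bar>\<mu> - l\<bar> * N / L)" using Pb u by (intro mult_left_mono) auto
    finally show ?thesis .
  qed
  have "((\<lambda>\<mu>. (M \<mu> - M l) / (\<mu> - l) - d) \<longlongrightarrow> 0) (at l)"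
  proof (rule Lim_null_comparison)
    show "eventually (\<lambda>\<mu>. norm ((M \<mu> - M l) / (\<mu> - l) - d) \<le> u * (2 * \<bar>\<mu> - l\<bar> * N / L)) (at l)"
      unfolding eventually_at
    proof (intro exI[of _ "L / 2"] conjI allI impI ballI)
      show "0 < L / 2" using L by simp
      fix \<mu> assume "\<mu> \<in> UNIV" "\<mu> \<noteq> l \<and> dist \<mu> l < L / 2"
      then show "norm ((M \<mu> - M l) / (\<mu> - l) - d) \<le> u * (2 * \<bar>\<mu> - l\<bar> * N / L)"
        using key[of \<mu>] by (simp add: dist_real_def)
    qed
    have "((\<lambda>\<mu>. u * (2 * \<bar>\<mu> - l\<bar> * N / L)) \<longlongrightarrow> u * (2 * \<bar>l - l\<bar> * N / L)) (at l)"
      using L by (intro tendsto_intros) auto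
    then show "((\<lambda>\<mu>. u * (2 * \<bar>\<mu> - l\<bar> * N / L)) \<longlongrightarrow> 0) (at l)" by simp
  qed
  then have "((\<lambda>\<mu>. (M \<mu> - M l) / (\<mu> - l)) \<longlongrightarrow> d) (at l)" by (simp add: Lim_null[symmetric])
  then have "(M has_real_derivative d) (at l)" by (simp add: has_field_derivative_iff)
  then show ?thesis using d by blast
qed

end

theorem lemma2p1:
  fixes U :: "real \<Rightarrow> real" and c\<^sub>0 C :: real
  assumes "Ck_on 4 {-1<..<1} U"
    and "c\<^sub>0 > 0"
    and "\<forall>y\<in>{-1<..<1}. deriv U y > c\<^sub>0"
    and "U 0 = 0"
    and "deriv (deriv U) 0 = 0"
    and "\<forall>y\<in>{-1<..<1}. - C \<le> deriv (deriv U) y / U y \<and> deriv (deriv U) y / U y \<le> 0"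
  shows "\<exists>M :: real \<Rightarrow> real.
           (\<forall>m lam. lam < 0 \<longrightarrow> (has_nontrivial_sol U m lam \<longleftrightarrow> m = M lam)) \<and>
           (\<forall>lam<0. \<exists>d. (M has_real_derivative d) (at lam) \<and> d < 0)"
proof -
  interpret Uctx U c\<^sub>0 C using assms by unfold_locales
  define M where "M lam = (SOME m. \<exists>\<Phi> \<Phi>'. weak_sol U m lam \<Phi> \<Phi>' \<and> \<Phi> 0 = 1)" for lam
  have Mex: "\<exists>\<Phi> \<Phi>'. weak_sol U (M \<mu>) \<mu> \<Phi> \<Phi>' \<and> \<Phi> 0 = 1" if "\<mu> < 0" for \<mu>
    unfolding M_def by (rule someI_ex) (rule exist_sol[OF that])
  have A: "\<forall>m lam. lam < 0 \<longrightarrow> (has_nontrivial_sol U m lam \<longleftrightarrow> m = M lam)"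
  proof (intro allI impI)
    fix m lam :: real assume lam: "lam < 0"
    obtain \<Phi> \<Phi>' where W: "weak_sol U (M lam) lam \<Phi> \<Phi>'" "\<Phi> 0 = 1" using Mex[OF lam] by blast
    show "has_nontrivial_sol U m lam \<longleftrightarrow> m = M lam"
    proof
      assume "has_nontrivial_sol U m lam"
      then obtain \<Psi> \<Psi>' where "weak_sol U m lam \<Psi> \<Psi>'" "\<exists>x\<in>{-1..1}. \<Psi> x \<noteq> 0"
        unfolding has_nontrivial_sol_def by blast
      then show "m = M lam" using uniq[OF lam _ W(1) W(2)] by blast
    next
      assume mM: "m = M lam"
      have "\<exists>x\<in>{-1..1}. \<Phi> x \<noteq> 0" using W(2) by (intro bexI[of _ 0]) auto
      then show "has_nontrivial_sol U m lam"
        unfolding has_nontrivial_sol_def using W(1) mM by blast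
    qed
  qed
  have B: "\<forall>lam<0. \<exists>d. (M has_real_derivative d) (at lam) \<and> d < 0"
    using Mderiv[OF Mex] by blast
  show ?thesis using A B by blast
qed

end
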